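(* Assume $r>\mu$. For every $p>0$, $J(p)=\widetilde{J}(p)$, where \[ \widetilde{J}(p):=\sup_{\tau_I\le\tau_O}\mathbb{E}^p\left[\int_{\tau_I}^{\tau_O}e^{-rt}(P(t)-C)\,\mathrm{d}t-e^{-r\tau_I}(k_1P(\tau_I)+k_0)-e^{-r\tau_O}(l_1P(\tau_O)+l_0)\right] \] with \[ k_1:=\frac{e^{(\mu-r)\delta}-1}{\mu-r},\quad k_0:=\frac{C}{r}(e^{-r\delta}-1)+e^{-r\delta}K_I,\quad l_1:=-\frac{e^{(\mu-r)\delta}-1}{\mu-r},\quad l_0:=-\frac{C}{r}(e^{-r\delta}-1)+e^{-r\delta}K_O; \] moreover, any pair $(\tau_I^*,\tau_O^* )$ of stopping times with $\tau_I^*\le\tau_O^*$ maximizing the problem defining $\widetilde{J}$ also maximizes the problem defining $J$.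
   Context: Let $(\Omega,\mathscr{F},\{\mathscr{F}_t\}_{t\ge0},\mathbb{P})$ be a filtered probability space satisfying the usual conditions with $\mathscr{F}_0$ the completion of $\{\emptyset,\Omega\}$, carrying a one-dimensional standard Brownian motion $B$. For constants $\mu\in\mathbb{R}$, $\sigma>0$, $p>0$, the price process $P$ solves $\mathrm{d}P(t)=\mu P(t)\,\mathrm{d}t+\sigma P(t)\,\mathrm{d}B(t)$, $P(0)=p$. $\mathbb{E}^p$ denotes expectation given $P(0)=p$. Stopping times take values in $[0,+\infty]$, and terms of the form $\exp(-r\tau)(\cdots)$ are $0$ on $\{\tau=+\infty\}$. Constants: discount rate $r>0$, running cost $C\in\mathbb{R}$, entry cost $K_I\in\mathbb{R}$, exit cost $K_O\in\mathbb{R}$, delay $\delta\ge0$. Define \[ J(p):=\sup_{\tau_I\le\tau_O}\mathbb{E}^p\left[\int_{\tau_I+\delta}^{\tau_O+\delta}e^{-rt}(P(t)-C)\,\mathrm{d}t-e^{-r(\tau_I+\delta)}K_I-e^{-r(\tau_O+\delta)}K_O\right], \] the supremum over stopping times $\tau_I\le\tau_O$. *)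

theory Defs
  imports "HOL-Probability.Probability"
begin

definition usual_filtration :: "'a measure \<Rightarrow> (real \<Rightarrow> 'a measure) \<Rightarrow> bool" where
  "usual_filtration M F \<longleftrightarrow>
     \<comment> \<open>a filtration of sub-sigma-algebras of M, indexed by t \<ge> 0\<close>
     (\<forall>t\<ge>0. space (F t) = space M \<and> sets (F t) \<subseteq> sets M) \<and>
     (\<forall>s t. 0 \<le> s \<longrightarrow> s \<le> t \<longrightarrow> sets (F s) \<subseteq> sets (F t)) \<and>
     \<comment> \<open>right-continuity\<close>
     (\<forall>t\<ge>0. sets (F t) = (\<Inter>u\<in>{t<..}. sets (F u))) \<and>
     \<comment> \<open>completeness of the underlying space\<close>
     (\<forall>A\<in>sets M. emeasure M A = 0 \<longrightarrow> (\<forall>N. N \<subseteq> A \<longrightarrow> N \<in> sets M)) \<and>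
     \<comment> \<open>F_0 is the completion of the trivial sigma-algebra (contains all null sets)\<close>
     sets (F 0) = {A \<in> sets M. emeasure M A = 0 \<or> emeasure M (space M - A) = 0}"

definition std_brownian_motion ::
    "'a measure \<Rightarrow> (real \<Rightarrow> 'a measure) \<Rightarrow> (real \<Rightarrow> 'a \<Rightarrow> real) \<Rightarrow> bool" where
  "std_brownian_motion M F B \<longleftrightarrow>
     (\<forall>\<omega>\<in>space M. B 0 \<omega> = 0) \<and>
     (\<forall>\<omega>\<in>space M. continuous_on {0..} (\<lambda>t. B t \<omega>)) \<and>
     (\<forall>t\<ge>0. B t \<in> borel_measurable (F t)) \<and>
     (\<forall>s t. 0 \<le> s \<longrightarrow> s < t \<longrightarrow>
        distributed M lborel (\<lambda>\<omega>. B t \<omega> - B s \<omega>) (normal_density 0 (sqrt (t - s))) \<and>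
        prob_space.indep_set M (sets (F s))
          {(\<lambda>\<omega>. B t \<omega> - B s \<omega>) -` U \<inter> space M | U. U \<in> sets borel})"

text \<open>Unique strong solution of dP = mu P dt + sigma P dB, P(0) = p.\<close>
definition gbm :: "real \<Rightarrow> real \<Rightarrow> real \<Rightarrow> (real \<Rightarrow> 'a \<Rightarrow> real) \<Rightarrow> real \<Rightarrow> 'a \<Rightarrow> real" where
  "gbm \<mu> \<sigma> p B t \<omega> = p * exp ((\<mu> - \<sigma>\<^sup>2 / 2) * t + \<sigma> * B t \<omega>)"

definition stopping_time_inf :: "'a measure \<Rightarrow> (real \<Rightarrow> 'a measure) \<Rightarrow> ('a \<Rightarrow> ereal) \<Rightarrow> bool" where
  "stopping_time_inf M F \<tau> \<longleftrightarrow>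
     (\<forall>\<omega>\<in>space M. 0 \<le> \<tau> \<omega>) \<and>
     (\<forall>t\<ge>0. {\<omega>\<in>space M. \<tau> \<omega> \<le> ereal t} \<in> sets (F t))"

definition admissible :: "'a measure \<Rightarrow> (real \<Rightarrow> 'a measure) \<Rightarrow> ('a \<Rightarrow> ereal) \<Rightarrow> ('a \<Rightarrow> ereal) \<Rightarrow> bool" where
  "admissible M F \<tau>I \<tau>O \<longleftrightarrow>
     stopping_time_inf M F \<tau>I \<and> stopping_time_inf M F \<tau>O \<and> (\<forall>\<omega>\<in>space M. \<tau>I \<omega> \<le> \<tau>O \<omega>)"

definition disc_at :: "real \<Rightarrow> (real \<Rightarrow> real) \<Rightarrow> ereal \<Rightarrow> real" where
  "disc_at r f \<tau> = (case \<tau> of ereal x \<Rightarrow> exp (- r * x) * f x | _ \<Rightarrow> 0)"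

definition run_int :: "real \<Rightarrow> real \<Rightarrow> (real \<Rightarrow> real) \<Rightarrow> ereal \<Rightarrow> ereal \<Rightarrow> real" where
  "run_int r C P a b = (LINT t:{t. a \<le> ereal t \<and> ereal t < b}|lborel. exp (- r * t) * (P t - C))"

definition reward_J ::
    "real \<Rightarrow> real \<Rightarrow> real \<Rightarrow> real \<Rightarrow> real \<Rightarrow> real \<Rightarrow> real \<Rightarrow> real \<Rightarrow> (real \<Rightarrow> 'a \<Rightarrow> real)
     \<Rightarrow> ('a \<Rightarrow> ereal) \<Rightarrow> ('a \<Rightarrow> ereal) \<Rightarrow> 'a \<Rightarrow> real" where
  "reward_J \<mu> \<sigma> r C KI KO \<delta> p B \<tau>I \<tau>O \<omega> =
     run_int r C (\<lambda>t. gbm \<mu> \<sigma> p B t \<omega>) (\<tau>I \<omega> + ereal \<delta>) (\<tau>O \<omega> + ereal \<delta>)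
     - disc_at r (\<lambda>_. KI) (\<tau>I \<omega> + ereal \<delta>)
     - disc_at r (\<lambda>_. KO) (\<tau>O \<omega> + ereal \<delta>)"

definition J_val ::
    "'a measure \<Rightarrow> (real \<Rightarrow> 'a measure) \<Rightarrow> (real \<Rightarrow> 'a \<Rightarrow> real) \<Rightarrow>
     real \<Rightarrow> real \<Rightarrow> real \<Rightarrow> real \<Rightarrow> real \<Rightarrow> real \<Rightarrow> real \<Rightarrow> real \<Rightarrow> ereal" where
  "J_val M F B \<mu> \<sigma> r C KI KO \<delta> p =
     (SUP \<tau>\<in>{(\<tau>I, \<tau>O). admissible M F \<tau>I \<tau>O}.
        ereal (integral\<^sup>L M (reward_J \<mu> \<sigma> r C KI KO \<delta> p B (fst \<tau>) (snd \<tau>))))"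

definition k1 :: "real \<Rightarrow> real \<Rightarrow> real \<Rightarrow> real" where
  "k1 \<mu> r \<delta> = (exp ((\<mu> - r) * \<delta>) - 1) / (\<mu> - r)"
definition k0 :: "real \<Rightarrow> real \<Rightarrow> real \<Rightarrow> real \<Rightarrow> real" where
  "k0 r C KI \<delta> = C / r * (exp (- r * \<delta>) - 1) + exp (- r * \<delta>) * KI"
definition l1 :: "real \<Rightarrow> real \<Rightarrow> real \<Rightarrow> real" where
  "l1 \<mu> r \<delta> = - (exp ((\<mu> - r) * \<delta>) - 1) / (\<mu> - r)"
definition l0 :: "real \<Rightarrow> real \<Rightarrow> real \<Rightarrow> real \<Rightarrow> real" where
  "l0 r C KO \<delta> = - (C / r) * (exp (- r * \<delta>) - 1) + exp (- r * \<delta>) * KO"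

definition reward_Jt ::
    "real \<Rightarrow> real \<Rightarrow> real \<Rightarrow> real \<Rightarrow> real \<Rightarrow> real \<Rightarrow> real \<Rightarrow> real \<Rightarrow> (real \<Rightarrow> 'a \<Rightarrow> real)
     \<Rightarrow> ('a \<Rightarrow> ereal) \<Rightarrow> ('a \<Rightarrow> ereal) \<Rightarrow> 'a \<Rightarrow> real" where
  "reward_Jt \<mu> \<sigma> r C KI KO \<delta> p B \<tau>I \<tau>O \<omega> =
     run_int r C (\<lambda>t. gbm \<mu> \<sigma> p B t \<omega>) (\<tau>I \<omega>) (\<tau>O \<omega>)
     - disc_at r (\<lambda>t. k1 \<mu> r \<delta> * gbm \<mu> \<sigma> p B t \<omega> + k0 r C KI \<delta>) (\<tau>I \<omega>)
     - disc_at r (\<lambda>t. l1 \<mu> r \<delta> * gbm \<mu> \<sigma> p B t \<omega> + l0 r C KO \<delta>) (\<tau>O \<omega>)"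

definition Jt_val ::
    "'a measure \<Rightarrow> (real \<Rightarrow> 'a measure) \<Rightarrow> (real \<Rightarrow> 'a \<Rightarrow> real) \<Rightarrow>
     real \<Rightarrow> real \<Rightarrow> real \<Rightarrow> real \<Rightarrow> real \<Rightarrow> real \<Rightarrow> real \<Rightarrow> real \<Rightarrow> ereal" where
  "Jt_val M F B \<mu> \<sigma> r C KI KO \<delta> p =
     (SUP \<tau>\<in>{(\<tau>I, \<tau>O). admissible M F \<tau>I \<tau>O}.
        ereal (integral\<^sup>L M (reward_Jt \<mu> \<sigma> r C KI KO \<delta> p B (fst \<tau>) (snd \<tau>))))"

end

theory Submission imports Defs "HOL-Real_Asymp.Real_Asymp" begin

lemma dyadic_floor_lim: "(\<lambda>n::nat. real_of_int \<lfloor>2^n * t\<rfloor> / 2^n) \<longlonglongrightarrow> t"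
proof (rule tendsto_sandwich)
  have "(\<lambda>n::nat. t - (1/2)^n) \<longlonglongrightarrow> t - 0"
    by (intro tendsto_diff tendsto_const LIMSEQ_realpow_zero) auto
  then show "(\<lambda>n::nat. t - (1/2)^n) \<longlonglongrightarrow> t" by simp
  show "(\<lambda>n::nat. t) \<longlonglongrightarrow> t" by simp
  show "\<forall>\<^sub>F n in sequentially. t - (1/2)^n \<le> real_of_int \<lfloor>2^n * t\<rfloor> / 2^n"
  proof (rule always_eventually, rule allI)
    fix n :: nat
    have "2^n * t - 1 \<le> real_of_int \<lfloor>2^n * t\<rfloor>" by linarith
    then have "(2^n * t - 1) / 2^n \<le> real_of_int \<lfloor>2^n * t\<rfloor> / 2^n" by (simp add: divide_right_mono)
    moreover have "(2^n * t - 1) / 2^n = t - (1/2)^n" by (simp add: field_simps power_one_over)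
    ultimately show "t - (1/2)^n \<le> real_of_int \<lfloor>2^n * t\<rfloor> / 2^n" by simp
  qed
  show "\<forall>\<^sub>F n in sequentially. real_of_int \<lfloor>2^n * t\<rfloor> / 2^n \<le> t"
  proof (rule always_eventually, rule allI)
    fix n :: nat
    have "real_of_int \<lfloor>2^n * t\<rfloor> \<le> 2^n * t" by linarith
    then show "real_of_int \<lfloor>2^n * t\<rfloor> / 2^n \<le> t" by (simp add: field_simps)
  qed
qed

lemma dyadic_ceil_lim: "(\<lambda>n::nat. real_of_int \<lceil>2^n * t\<rceil> / 2^n) \<longlonglongrightarrow> t"
proof -
  have "(\<lambda>n::nat. - (real_of_int \<lfloor>2^n * (-t)\<rfloor> / 2^n)) \<longlonglongrightarrow> - (-t)"
    by (intro tendsto_minus dyadic_floor_lim)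
  moreover have "- (real_of_int \<lfloor>2^n * (-t)\<rfloor> / 2^n) = real_of_int \<lceil>2^n * t\<rceil> / 2^n" for n :: nat
    by (simp add: ceiling_def)
  ultimately show ?thesis by simp
qed

lemma dyadic_ceil_ge: "t \<le> real_of_int \<lceil>2^n * t\<rceil> / 2^n"
proof -
  have "2^n * t \<le> real_of_int \<lceil>2^n * t\<rceil>" by linarith
  then show ?thesis by (simp add: field_simps)
qed

lemma dyadic_ceil_le_iff:
  "real_of_int \<lceil>2^n * x\<rceil> / 2^n \<le> t \<longleftrightarrow> x \<le> real_of_int \<lfloor>2^n * t\<rfloor> / 2^n"
proof -
  have p: "(0::real) < 2^n" by simp
  have "real_of_int \<lceil>2^n * x\<rceil> / 2^n \<le> t \<longleftrightarrow> real_of_int \<lceil>2^n * x\<rceil> \<le> 2^n * t"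
    using p by (simp add: divide_le_eq mult.commute)
  also have "\<dots> \<longleftrightarrow> \<lceil>2^n * x\<rceil> \<le> \<lfloor>2^n * t\<rfloor>" by (simp add: le_floor_iff)
  also have "\<dots> \<longleftrightarrow> 2^n * x \<le> real_of_int \<lfloor>2^n * t\<rfloor>" by (simp add: ceiling_le_iff)
  also have "\<dots> \<longleftrightarrow> x \<le> real_of_int \<lfloor>2^n * t\<rfloor> / 2^n"
    using p by (simp add: le_divide_eq mult.commute)
  finally show ?thesis .
qed

lemma (in prob_space) ui_conv:
  fixes f :: "nat \<Rightarrow> 'a \<Rightarrow> real" and g :: "'a \<Rightarrow> real"
  assumes fm: "\<And>k. f k \<in> borel_measurable M" and gm: "g \<in> borel_measurable M"
    and nn: "\<And>k x. 0 \<le> f k x"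
    and lim: "\<And>x. x \<in> space M \<Longrightarrow> (\<lambda>k. f k x) \<longlonglongrightarrow> g x"
    and K: "0 \<le> K" and bnd: "\<And>k. (\<integral>\<^sup>+x. ennreal ((f k x)^2) \<partial>M) \<le> ennreal K"
  shows "(\<lambda>k. \<integral>\<^sup>+x. ennreal (f k x) \<partial>M) \<longlonglongrightarrow> (\<integral>\<^sup>+x. ennreal (g x) \<partial>M)"
proof -
  have gnn: "0 \<le> g x" if "x \<in> space M" for x
    by (rule LIMSEQ_le_const[OF lim[OF that]]) (use nn in blast)
  have lower: "(\<integral>\<^sup>+x. ennreal (g x) \<partial>M) \<le> liminf (\<lambda>k. \<integral>\<^sup>+x. ennreal (f k x) \<partial>M)"
  proof -
    have "(\<integral>\<^sup>+x. ennreal (g x) \<partial>M) = (\<integral>\<^sup>+x. liminf (\<lambda>k. ennreal (f k x)) \<partial>M)"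
    proof (rule nn_integral_cong)
      fix x assume "x \<in> space M"
      then have "(\<lambda>k. ennreal (f k x)) \<longlonglongrightarrow> ennreal (g x)" by (intro tendsto_ennrealI lim)
      then show "ennreal (g x) = liminf (\<lambda>k. ennreal (f k x))" by (simp add: lim_imp_Liminf)
    qed
    also have "\<dots> \<le> liminf (\<lambda>k. \<integral>\<^sup>+x. ennreal (f k x) \<partial>M)"
      by (rule nn_integral_liminf) (use fm in measurable)
    finally show ?thesis .
  qed
  have upper_c: "limsup (\<lambda>k. \<integral>\<^sup>+x. ennreal (f k x) \<partial>M) \<le> (\<integral>\<^sup>+x. ennreal (g x) \<partial>M) + ennreal (K / c)"
    if c: "0 < c" for c
  proof -
    have pw: "ennreal (f k x) \<le> ennreal (min (f k x) c) + ennreal ((f k x)^2 / c)" for k x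
    proof -
      have "f k x \<le> min (f k x) c + (f k x)^2 / c"
      proof (cases "f k x \<le> c")
        case True then show ?thesis using c by simp
      next
        case False
        then have "c * f k x \<le> f k x * f k x" using c by (intro mult_right_mono) auto
        then have "c * f k x \<le> (f k x)^2" by (simp add: power2_eq_square)
        then have "(c * f k x) / c \<le> (f k x)^2 / c" using c by (intro divide_right_mono) auto
        then have "f k x \<le> (f k x)^2 / c" using c by simp
        moreover have "min (f k x) c = c" using False by simp
        ultimately show ?thesis using c by linarith
      qed
      then have "ennreal (f k x) \<le> ennreal (min (f k x) c + (f k x)^2 / c)" by (rule ennreal_leI)
      also have "\<dots> = ennreal (min (f k x) c) + ennreal ((f k x)^2 / c)"
        by (rule ennreal_plus) (use nn[of k x] c in auto)
      finally show ?thesis .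
    qed
    have bnd2: "(\<integral>\<^sup>+x. ennreal ((f k x)^2 / c) \<partial>M) \<le> ennreal (K / c)" for k
    proof -
      have "(\<integral>\<^sup>+x. ennreal ((f k x)^2 / c) \<partial>M) = (\<integral>\<^sup>+x. ennreal ((f k x)^2) * ennreal (1/c) \<partial>M)"
      proof (rule nn_integral_cong)
        fix x
        have "ennreal ((f k x)^2 * (1/c)) = ennreal ((f k x)^2) * ennreal (1/c)"
          by (rule ennreal_mult'') (use c in simp)
        then show "ennreal ((f k x)^2 / c) = ennreal ((f k x)^2) * ennreal (1/c)" by simp
      qed
      also have "\<dots> = (\<integral>\<^sup>+x. ennreal ((f k x)^2) \<partial>M) * ennreal (1/c)"
        by (rule nn_integral_multc) (use fm in measurable)
      also have "\<dots> \<le> ennreal K * ennreal (1/c)"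
        by (intro mult_right_mono bnd) simp
      also have "\<dots> = ennreal (K * (1 / c))"
        by (rule ennreal_mult''[symmetric]) (use c in simp)
      also have "\<dots> = ennreal (K / c)" by simp
      finally show ?thesis .
    qed
    have step: "(\<integral>\<^sup>+x. ennreal (f k x) \<partial>M) \<le> (\<integral>\<^sup>+x. ennreal (min (f k x) c) \<partial>M) + ennreal (K / c)" for k
    proof -
      have "(\<integral>\<^sup>+x. ennreal (f k x) \<partial>M) \<le> (\<integral>\<^sup>+x. ennreal (min (f k x) c) + ennreal ((f k x)^2 / c) \<partial>M)"
        by (intro nn_integral_mono pw)
      also have "\<dots> = (\<integral>\<^sup>+x. ennreal (min (f k x) c) \<partial>M) + (\<integral>\<^sup>+x. ennreal ((f k x)^2 / c) \<partial>M)"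
        by (rule nn_integral_add; use fm in measurable)
      also have "\<dots> \<le> (\<integral>\<^sup>+x. ennreal (min (f k x) c) \<partial>M) + ennreal (K / c)"
        by (intro add_left_mono bnd2)
      finally show ?thesis .
    qed
    have conv: "(\<lambda>k. \<integral>\<^sup>+x. ennreal (min (f k x) c) \<partial>M) \<longlonglongrightarrow> (\<integral>\<^sup>+x. ennreal (min (g x) c) \<partial>M)"
    proof (rule nn_integral_dominated_convergence[where w="\<lambda>_. ennreal c"])
      show "(\<lambda>x. ennreal (min (f i x) c)) \<in> borel_measurable M" for i using fm by measurable
      show "(\<lambda>x. ennreal (min (g x) c)) \<in> borel_measurable M" using gm by measurable
      show "(\<lambda>_. ennreal c) \<in> borel_measurable M" by simp
      show "AE x in M. ennreal (min (f j x) c) \<le> ennreal c" for j by (simp add: ennreal_leI)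
      show "integral\<^sup>N M (\<lambda>_. ennreal c) < \<infinity>" by (simp add: emeasure_space_1)
      show "AE x in M. (\<lambda>i. ennreal (min (f i x) c)) \<longlonglongrightarrow> ennreal (min (g x) c)"
        by (rule AE_I2) (intro tendsto_ennrealI tendsto_min tendsto_const lim)
    qed
    have "limsup (\<lambda>k. \<integral>\<^sup>+x. ennreal (f k x) \<partial>M) \<le> limsup (\<lambda>k. (\<integral>\<^sup>+x. ennreal (min (f k x) c) \<partial>M) + ennreal (K / c))"
      by (intro Limsup_mono always_eventually allI step)
    also have "\<dots> = (\<integral>\<^sup>+x. ennreal (min (g x) c) \<partial>M) + ennreal (K / c)"
      by (intro lim_imp_Limsup tendsto_add conv tendsto_const) simp
    also have "\<dots> \<le> (\<integral>\<^sup>+x. ennreal (g x) \<partial>M) + ennreal (K / c)"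
      by (intro add_right_mono nn_integral_mono ennreal_leI) simp
    finally show ?thesis .
  qed
  have upper: "limsup (\<lambda>k. \<integral>\<^sup>+x. ennreal (f k x) \<partial>M) \<le> (\<integral>\<^sup>+x. ennreal (g x) \<partial>M)"
  proof (rule ennreal_le_epsilon)
    fix e :: real assume e: "0 < e"
    define c where "c = (K + 1) / e"
    have c: "0 < c" using e K by (simp add: c_def)
    have "K / c \<le> e" using e K by (simp add: c_def field_simps)
    then have "ennreal (K / c) \<le> ennreal e" by (rule ennreal_leI)
    then have "(\<integral>\<^sup>+x. ennreal (g x) \<partial>M) + ennreal (K / c) \<le> (\<integral>\<^sup>+x. ennreal (g x) \<partial>M) + ennreal e"
      by (rule add_left_mono)
    with upper_c[OF c] show "limsup (\<lambda>k. \<integral>\<^sup>+x. ennreal (f k x) \<partial>M) \<le> (\<integral>\<^sup>+x. ennreal (g x) \<partial>M) + ennreal e"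
      by (rule order_trans)
  qed
  have ll: "liminf (\<lambda>k. \<integral>\<^sup>+x. ennreal (f k x) \<partial>M) \<le> limsup (\<lambda>k. \<integral>\<^sup>+x. ennreal (f k x) \<partial>M)"
    by (rule Liminf_le_Limsup) simp
  show ?thesis
  proof (rule Liminf_eq_Limsup)
    show "sequentially \<noteq> bot" by simp
    show "liminf (\<lambda>k. \<integral>\<^sup>+x. ennreal (f k x) \<partial>M) = (\<integral>\<^sup>+x. ennreal (g x) \<partial>M)"
      using antisym[OF order_trans[OF ll upper] lower] .
    show "limsup (\<lambda>k. \<integral>\<^sup>+x. ennreal (f k x) \<partial>M) = (\<integral>\<^sup>+x. ennreal (g x) \<partial>M)"
      using antisym[OF upper order_trans[OF lower ll]] .
  qed
qed

locale bmset = prob_space M for M :: "'a measure" +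
  fixes F :: "real \<Rightarrow> 'a measure" and B :: "real \<Rightarrow> 'a \<Rightarrow> real"
  assumes filt: "usual_filtration M F" and bm: "std_brownian_motion M F B"
begin

lemma filt1: "\<forall>t\<ge>0. space (F t) = space M \<and> sets (F t) \<subseteq> sets M"
  using filt[unfolded usual_filtration_def] by (rule conjunct1)
lemma filt2: "\<forall>s t. 0 \<le> s \<longrightarrow> s \<le> t \<longrightarrow> sets (F s) \<subseteq> sets (F t)"
  using filt[unfolded usual_filtration_def] by (elim conjE)
lemma bm1: "\<forall>\<omega>\<in>space M. B 0 \<omega> = 0"
  using bm[unfolded std_brownian_motion_def] by (rule conjunct1)
lemma bm2: "\<forall>\<omega>\<in>space M. continuous_on {0..} (\<lambda>t. B t \<omega>)"
  using bm[unfolded std_brownian_motion_def] by (elim conjE)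
lemma bm3: "\<forall>t\<ge>0. B t \<in> borel_measurable (F t)"
  using bm[unfolded std_brownian_motion_def] by (elim conjE)
lemma bm4: "\<forall>s t. 0 \<le> s \<longrightarrow> s < t \<longrightarrow>
        distributed M lborel (\<lambda>\<omega>. B t \<omega> - B s \<omega>) (\<lambda>x. ennreal (normal_density 0 (sqrt (t - s)) x)) \<and>
        indep_set (sets (F s)) {(\<lambda>\<omega>. B t \<omega> - B s \<omega>) -` U \<inter> space M | U. U \<in> sets borel}"
  using bm[unfolded std_brownian_motion_def] by (elim conjE)

lemma F_space: "0 \<le> t \<Longrightarrow> space (F t) = space M"
  using filt1 by blast
lemma F_sets: "0 \<le> t \<Longrightarrow> sets (F t) \<subseteq> sets M"
  using filt1 by blast
lemma F_mono: "0 \<le> s \<Longrightarrow> s \<le> t \<Longrightarrow> sets (F s) \<subseteq> sets (F t)"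
  using filt2 by blast
lemma B_meas_F: "0 \<le> t \<Longrightarrow> B t \<in> borel_measurable (F t)"
  using bm3 by blast
lemma subalg: "0 \<le> t \<Longrightarrow> subalgebra M (F t)"
  using F_space F_sets unfolding subalgebra_def by auto
lemma meas_F_M: "0 \<le> t \<Longrightarrow> f \<in> measurable (F t) N \<Longrightarrow> f \<in> measurable M N"
  using measurable_from_subalg subalg by blast
lemma B_meas[measurable]: "0 \<le> t \<Longrightarrow> B t \<in> borel_measurable M"
  using meas_F_M B_meas_F by blast
lemma B0: "\<omega> \<in> space M \<Longrightarrow> B 0 \<omega> = 0"
  using bm1 by blast
lemma Bcont: "\<omega> \<in> space M \<Longrightarrow> continuous_on {0..} (\<lambda>t. B t \<omega>)"
  using bm2 by blast
lemma incr_distr: "0 \<le> s \<Longrightarrow> s < t \<Longrightarrow>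
  distributed M lborel (\<lambda>\<omega>. B t \<omega> - B s \<omega>) (\<lambda>x. ennreal (normal_density 0 (sqrt (t - s)) x))"
  using bm4 by blast
lemma incr_indep: "0 \<le> s \<Longrightarrow> s < t \<Longrightarrow>
  indep_set (sets (F s)) {(\<lambda>\<omega>. B t \<omega> - B s \<omega>) -` U \<inter> space M |U. U \<in> sets borel}"
  using bm4 by blast

lemma mgf:
  assumes "0 \<le> t" "0 < h"
  shows "(\<integral>\<^sup>+\<omega>. ennreal (exp (a * (B (t+h) \<omega> - B t \<omega>) - a\<^sup>2*h/2)) \<partial>M) = 1"
proof -
  have d: "distributed M lborel (\<lambda>\<omega>. B (t+h) \<omega> - B t \<omega>) (\<lambda>x. ennreal (normal_density 0 (sqrt h) x))"
    using incr_distr[of t "t+h"] assms by simp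
  have "(\<integral>\<^sup>+\<omega>. ennreal (exp (a * (B (t+h) \<omega> - B t \<omega>) - a\<^sup>2*h/2)) \<partial>M)
     = (\<integral>\<^sup>+x. ennreal (normal_density 0 (sqrt h) x) * ennreal (exp (a*x - a\<^sup>2*h/2)) \<partial>lborel)"
    by (rule distributed_nn_integral[OF d, symmetric]) simp
  also have "\<dots> = (\<integral>\<^sup>+x. ennreal (normal_density (a*h) (sqrt h) x) \<partial>lborel)"
  proof (rule nn_integral_cong)
    fix x :: real
    have e: "-(x)\<^sup>2/(2*h) + (a*x - a\<^sup>2*h/2) = -(x - a*h)\<^sup>2/(2*h)"
      using assms by (simp add: field_simps power2_eq_square)
    have "normal_density 0 (sqrt h) x * exp (a*x - a\<^sup>2*h/2)
        = 1 / sqrt (2 * pi * h) * (exp (-(x)\<^sup>2/(2*h)) * exp (a*x - a\<^sup>2*h/2))"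
      using assms unfolding normal_density_def by simp
    also have "\<dots> = 1 / sqrt (2 * pi * h) * exp (-(x - a*h)\<^sup>2/(2*h))"
      unfolding exp_add[symmetric] e ..
    also have "\<dots> = normal_density (a*h) (sqrt h) x"
      using assms unfolding normal_density_def by simp
    finally have "normal_density 0 (sqrt h) x * exp (a*x - a\<^sup>2*h/2) = normal_density (a*h) (sqrt h) x" .
    then show "ennreal (normal_density 0 (sqrt h) x) * ennreal (exp (a*x - a\<^sup>2*h/2)) = ennreal (normal_density (a*h) (sqrt h) x)"
      by (simp add: ennreal_mult''[symmetric])
  qed
  also have "\<dots> = 1"
    using assms by (subst nn_integral_eq_integral) auto
  finally show ?thesis .
qed

lemma indep_prod:
  fixes f :: "'a \<Rightarrow> ennreal" and g :: "real \<Rightarrow> ennreal"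
  assumes t: "0 \<le> t" "0 < h" and f: "f \<in> borel_measurable (F t)" and g: "g \<in> borel_measurable borel"
  shows "(\<integral>\<^sup>+\<omega>. f \<omega> * g (B (t+h) \<omega> - B t \<omega>) \<partial>M) = (\<integral>\<^sup>+\<omega>. f \<omega> \<partial>M) * (\<integral>\<^sup>+\<omega>. g (B (t+h) \<omega> - B t \<omega>) \<partial>M)"
proof -
  define D where "D = (\<lambda>\<omega>. B (t+h) \<omega> - B t \<omega>)"
  have Dm: "D \<in> borel_measurable M" unfolding D_def using t by (intro borel_measurable_diff B_meas) auto
  have fM: "f \<in> borel_measurable M" using meas_F_M[OF t(1) f] .
  have gD: "g \<circ> D \<in> borel_measurable M" using g Dm by (simp add: measurable_comp)
  define Dfam where "Dfam = {D -` U \<inter> space M |U. U \<in> sets borel}"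
  have st1: "Int_stable (sets (F t))" by (auto simp: Int_stable_def)
  have st2: "Int_stable Dfam"
    unfolding Int_stable_def Dfam_def
  proof safe
    fix U V :: "real set" assume "U \<in> sets borel" "V \<in> sets borel"
    then show "\<exists>W. D -` U \<inter> space M \<inter> (D -` V \<inter> space M) = D -` W \<inter> space M \<and> W \<in> sets borel"
      by (intro exI[of _ "U \<inter> V"]) auto
  qed
  have ss: "sigma_sets (space M) (sets (F t)) = sets (F t)"
    using sets.sigma_sets_eq[of "F t"] F_space[OF t(1)] by simp
  have I0: "indep_set (sets (F t)) (sigma_sets (space M) Dfam)"
    using indep_set_sigma_sets[OF _ st1 st2] incr_indep[of t "t+h"] t ss by (simp add: D_def Dfam_def)
  have sub1: "sigma_sets (space M) {f -` A \<inter> space M |A. A \<in> sets borel} \<subseteq> sets (F t)"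
  proof -
    have "{f -` A \<inter> space M |A. A \<in> sets borel} \<subseteq> sets (F t)"
      using measurable_sets[OF f] F_space[OF t(1)] by auto
    then show ?thesis using sets.sigma_sets_subset[of _ "F t"] F_space[OF t(1)] by simp
  qed
  have sub2: "sigma_sets (space M) {(g \<circ> D) -` A \<inter> space M |A. A \<in> sets borel} \<subseteq> sigma_sets (space M) Dfam"
  proof (rule sigma_sets_mono')
    show "{(g \<circ> D) -` A \<inter> space M |A. A \<in> sets borel} \<subseteq> Dfam"
    proof safe
      fix A :: "ennreal set" assume A: "A \<in> sets borel"
      have "g -` A \<in> sets borel" using measurable_sets[OF g A] by simp
      moreover have "(g \<circ> D) -` A \<inter> space M = D -` (g -` A) \<inter> space M" by auto
      ultimately show "(g \<circ> D) -` A \<inter> space M \<in> Dfam" unfolding Dfam_def by blast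
    qed
  qed
  have "indep_set (sigma_sets (space M) {f -` A \<inter> space M |A. A \<in> sets borel})
                  (sigma_sets (space M) {(g \<circ> D) -` A \<inter> space M |A. A \<in> sets borel})"
    using I0 sub1 sub2 unfolding indep_sets2_eq by blast
  then have ivc: "indep_var borel f borel (g \<circ> D)"
    unfolding indep_var_eq using fM gD by simp
  have cb: "case_bool borel borel = (\<lambda>_::bool. borel :: ennreal measure)" by (rule ext) (simp split: bool.split)
  have iv: "indep_vars (\<lambda>_. borel) (case_bool f (g \<circ> D)) UNIV"
    using ivc unfolding indep_var_def cb .
  have "(\<integral>\<^sup>+\<omega>. (\<Prod>i\<in>UNIV. case_bool f (g \<circ> D) i \<omega>) \<partial>M) = (\<Prod>i\<in>UNIV. \<integral>\<^sup>+\<omega>. case_bool f (g \<circ> D) i \<omega> \<partial>M)"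
    by (rule indep_vars_nn_integral) (use iv in auto)
  then show ?thesis by (simp add: UNIV_bool D_def mult.commute comp_def)
qed

definition EM :: "real \<Rightarrow> real \<Rightarrow> 'a \<Rightarrow> real" where
  "EM a t \<omega> = exp (a * B t \<omega> - a\<^sup>2 * t / 2)"

lemma Ex_meas_F: "0 \<le> t \<Longrightarrow> EM a t \<in> borel_measurable (F t)"
proof -
  assume t: "0 \<le> t"
  have "(\<lambda>x::real. exp (a*x - a\<^sup>2*t/2)) \<in> borel_measurable borel" by measurable
  from measurable_compose[OF B_meas_F[OF t] this] show ?thesis unfolding EM_def[abs_def] by simp
qed

lemma Ex_meas: "0 \<le> t \<Longrightarrow> EM a t \<in> borel_measurable M"
  using meas_F_M Ex_meas_F by blast

lemma Ex_pos: "0 < EM a t \<omega>" by (simp add: EM_def)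

lemma Ex0: "\<omega> \<in> space M \<Longrightarrow> EM a 0 \<omega> = 1"
  using B0 by (simp add: EM_def)

lemma mart:
  assumes t: "0 \<le> t" "0 \<le> h" and A: "A \<in> sets (F t)"
  shows "(\<integral>\<^sup>+\<omega>. indicator A \<omega> * ennreal (EM a (t+h) \<omega>) \<partial>M) = (\<integral>\<^sup>+\<omega>. indicator A \<omega> * ennreal (EM a t \<omega>) \<partial>M)"
proof (cases "h = 0")
  case True then show ?thesis by simp
next
  case False
  then have h: "0 < h" using t by simp
  have eq: "EM a (t+h) \<omega> = EM a t \<omega> * exp (a * (B (t+h) \<omega> - B t \<omega>) - a\<^sup>2*h/2)" for \<omega>
  proof -
    have "a * B (t+h) \<omega> - a\<^sup>2 * (t+h) / 2 = (a * B t \<omega> - a\<^sup>2 * t / 2) + (a * (B (t+h) \<omega> - B t \<omega>) - a\<^sup>2*h/2)"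
      by (simp add: algebra_simps add_divide_distrib)
    then show ?thesis unfolding EM_def by (simp add: exp_add)
  qed
  have fF: "(\<lambda>\<omega>. indicator A \<omega> * ennreal (EM a t \<omega>)) \<in> borel_measurable (F t)"
    using A Ex_meas_F[OF t(1)] by measurable
  have gb: "(\<lambda>x::real. ennreal (exp (a*x - a\<^sup>2*h/2))) \<in> borel_measurable borel" by measurable
  have "(\<integral>\<^sup>+\<omega>. indicator A \<omega> * ennreal (EM a (t+h) \<omega>) \<partial>M)
      = (\<integral>\<^sup>+\<omega>. (indicator A \<omega> * ennreal (EM a t \<omega>)) * ennreal (exp (a * (B (t+h) \<omega> - B t \<omega>) - a\<^sup>2*h/2)) \<partial>M)"
    unfolding eq by (simp add: ennreal_mult' Ex_pos less_imp_le mult.assoc)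
  also have "\<dots> = (\<integral>\<^sup>+\<omega>. indicator A \<omega> * ennreal (EM a t \<omega>) \<partial>M) * (\<integral>\<^sup>+\<omega>. ennreal (exp (a * (B (t+h) \<omega> - B t \<omega>) - a\<^sup>2*h/2)) \<partial>M)"
    using indep_prod[OF t(1) h fF gb] by simp
  also have "\<dots> = (\<integral>\<^sup>+\<omega>. indicator A \<omega> * ennreal (EM a t \<omega>) \<partial>M)"
    using mgf[OF t(1) h] by simp
  finally show ?thesis .
qed

lemma stop_le: "stopping_time_inf M F \<tau> \<Longrightarrow> 0 \<le> t \<Longrightarrow> {\<omega>\<in>space M. \<tau> \<omega> \<le> ereal t} \<in> sets (F t)"
  unfolding stopping_time_inf_def by blast
lemma stop_nonneg: "stopping_time_inf M F \<tau> \<Longrightarrow> \<omega> \<in> space M \<Longrightarrow> 0 \<le> \<tau> \<omega>"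
  unfolding stopping_time_inf_def by blast
lemma stop_le_M: "stopping_time_inf M F \<tau> \<Longrightarrow> 0 \<le> t \<Longrightarrow> {\<omega>\<in>space M. \<tau> \<omega> \<le> ereal t} \<in> events"
  using stop_le F_sets by blast

lemma stop_meas: assumes st: "stopping_time_inf M F \<tau>" shows "\<tau> \<in> borel_measurable M"
  unfolding borel_measurable_iff_Iic_ereal
proof
  fix a :: ereal
  show "\<tau> -` {..a} \<inter> space M \<in> events"
  proof (cases "a = \<infinity>")
    case True
    then have "\<tau> -` {..a} \<inter> space M = space M" by auto
    then show ?thesis by simp
  next
    case aninf: False
    show ?thesis
    proof (cases "a = -\<infinity> \<or> a < 0")
      case True
      have "\<tau> -` {..a} \<inter> space M = {}"
      proof (rule equals0I)
        fix \<omega> assume "\<omega> \<in> \<tau> -` {..a} \<inter> space M"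
        then have "0 \<le> \<tau> \<omega>" "\<tau> \<omega> \<le> a" using stop_nonneg[OF st] by auto
        then show False using True by auto
      qed
      then show ?thesis by simp
    next
      case False
      then obtain x where x: "a = ereal x" "0 \<le> x" using aninf by (cases a) auto
      have "\<tau> -` {..a} \<inter> space M = {\<omega>\<in>space M. \<tau> \<omega> \<le> ereal x}" using x by auto
      then show ?thesis using stop_le_M[OF st x(2)] by simp
    qed
  qed
qed

lemma disc_opt:
  fixes w :: "real \<Rightarrow> ennreal"
  assumes st: "stopping_time_inf M F \<tau>" and D: "finite D" "D \<subseteq> {0..}"
    and vals: "\<forall>\<omega>\<in>space M. \<tau> \<omega> = \<infinity> \<or> \<tau> \<omega> \<in> ereal ` D"
    and hh: "\<forall>d\<in>D. 0 \<le> hh d"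
  shows "(\<integral>\<^sup>+\<omega>. (if \<tau> \<omega> = \<infinity> then 0 else w (real_of_ereal (\<tau> \<omega>)) * ennreal (EM a (real_of_ereal (\<tau> \<omega>) + hh (real_of_ereal (\<tau> \<omega>))) \<omega>)) \<partial>M)
       = (\<integral>\<^sup>+\<omega>. (if \<tau> \<omega> = \<infinity> then 0 else w (real_of_ereal (\<tau> \<omega>)) * ennreal (EM a (real_of_ereal (\<tau> \<omega>)) \<omega>)) \<partial>M)"
proof -
  define S where "S d = {\<omega>\<in>space M. \<tau> \<omega> = ereal d}" for d
  have SF: "S d \<in> sets (F d)" if d: "d \<in> D" for d
  proof -
    have d0: "0 \<le> d" using d D by auto
    have eq: "S d = {\<omega>\<in>space M. \<tau> \<omega> \<le> ereal d} - (\<Union>d'\<in>{d'\<in>D. d' < d}. {\<omega>\<in>space M. \<tau> \<omega> \<le> ereal d'})"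
    proof safe
      fix \<omega> assume "\<omega> \<in> S d" then show "\<omega> \<in> space M" "\<tau> \<omega> \<le> ereal d" by (auto simp: S_def)
    next
      fix \<omega> d' assume "\<omega> \<in> S d" "d' \<in> D" "d' < d" "\<tau> \<omega> \<le> ereal d'"
      then show False by (auto simp: S_def)
    next
      fix \<omega> assume om: "\<omega> \<in> space M" "\<tau> \<omega> \<le> ereal d"
        and nn: "\<omega> \<notin> (\<Union>d'\<in>{d'\<in>D. d' < d}. {\<omega>\<in>space M. \<tau> \<omega> \<le> ereal d'})"
      from vals om obtain d'' where d'': "d'' \<in> D" "\<tau> \<omega> = ereal d''" by auto
      then have "d'' \<le> d" using om by simp
      moreover have "\<not> d'' < d"
      proof
        assume "d'' < d"
        then have "\<omega> \<in> (\<Union>d'\<in>{d'\<in>D. d' < d}. {\<omega>\<in>space M. \<tau> \<omega> \<le> ereal d'})" using d'' om by auto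
        with nn show False by blast
      qed
      ultimately have "d'' = d" by linarith
      then show "\<omega> \<in> S d" using d'' om by (auto simp: S_def)
    qed
    have "{\<omega>\<in>space M. \<tau> \<omega> \<le> ereal d'} \<in> sets (F d)" if "d' \<in> D" "d' < d" for d'
      using stop_le[OF st, of d'] F_mono[of d' d] that D by auto
    then have "(\<Union>d'\<in>{d'\<in>D. d' < d}. {\<omega>\<in>space M. \<tau> \<omega> \<le> ereal d'}) \<in> sets (F d)"
      using D by (intro sets.finite_UN) auto
    then show ?thesis unfolding eq using stop_le[OF st d0] by (intro sets.Diff) auto
  qed
  have SM: "S d \<in> events" if "d \<in> D" for d using SF[OF that] F_sets D that by auto
  have sumrep: "(if \<tau> \<omega> = \<infinity> then 0 else q (real_of_ereal (\<tau> \<omega>)) \<omega>) = (\<Sum>d\<in>D. indicator (S d) \<omega> * q d \<omega>)"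
    if om: "\<omega> \<in> space M" for q :: "real \<Rightarrow> 'a \<Rightarrow> ennreal" and \<omega>
  proof (cases "\<tau> \<omega> = \<infinity>")
    case True
    then show ?thesis by (simp add: S_def indicator_def)
  next
    case False
    with vals om obtain d0 where d0: "d0 \<in> D" "\<tau> \<omega> = ereal d0" by auto
    have "(\<Sum>d\<in>D. indicator (S d) \<omega> * q d \<omega>) = (\<Sum>d\<in>D. if d0 = d then q d \<omega> else 0)"
      by (intro sum.cong refl) (auto simp: S_def indicator_def om d0)
    also have "\<dots> = q d0 \<omega>" using d0 D by simp
    finally show ?thesis using d0 by simp
  qed
  have intsum: "(\<integral>\<^sup>+\<omega>. (if \<tau> \<omega> = \<infinity> then 0 else w (real_of_ereal (\<tau> \<omega>)) * ennreal (EM a (tt (real_of_ereal (\<tau> \<omega>))) \<omega>)) \<partial>M)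
      = (\<Sum>d\<in>D. w d * (\<integral>\<^sup>+\<omega>. indicator (S d) \<omega> * ennreal (EM a (tt d) \<omega>) \<partial>M))"
    if k: "\<forall>d\<in>D. 0 \<le> tt d" for tt
  proof -
    have "(\<integral>\<^sup>+\<omega>. (if \<tau> \<omega> = \<infinity> then 0 else w (real_of_ereal (\<tau> \<omega>)) * ennreal (EM a (tt (real_of_ereal (\<tau> \<omega>))) \<omega>)) \<partial>M)
       = (\<integral>\<^sup>+\<omega>. (\<Sum>d\<in>D. indicator (S d) \<omega> * (w d * ennreal (EM a (tt d) \<omega>))) \<partial>M)"
      by (intro nn_integral_cong) (simp add: sumrep[of _ "\<lambda>d \<omega>. w d * ennreal (EM a (tt d) \<omega>)"])
    also have "\<dots> = (\<Sum>d\<in>D. \<integral>\<^sup>+\<omega>. indicator (S d) \<omega> * (w d * ennreal (EM a (tt d) \<omega>)) \<partial>M)"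
    proof (rule nn_integral_sum)
      fix d assume "d \<in> D"
      then have "0 \<le> tt d" using D k by auto
      then have "EM a (tt d) \<in> borel_measurable M" by (rule Ex_meas)
      then show "(\<lambda>\<omega>. indicator (S d) \<omega> * (w d * ennreal (EM a (tt d) \<omega>))) \<in> borel_measurable M"
        using SM[OF \<open>d \<in> D\<close>] by measurable
    qed
    also have "\<dots> = (\<Sum>d\<in>D. w d * (\<integral>\<^sup>+\<omega>. indicator (S d) \<omega> * ennreal (EM a (tt d) \<omega>) \<partial>M))"
    proof (intro sum.cong refl)
      fix d assume "d \<in> D"
      then have "0 \<le> tt d" using D k by auto
      then have "EM a (tt d) \<in> borel_measurable M" by (rule Ex_meas)
      then have m: "(\<lambda>\<omega>. indicator (S d) \<omega> * ennreal (EM a (tt d) \<omega>)) \<in> borel_measurable M"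
        using SM[OF \<open>d \<in> D\<close>] by measurable
      show "(\<integral>\<^sup>+\<omega>. indicator (S d) \<omega> * (w d * ennreal (EM a (tt d) \<omega>)) \<partial>M) = w d * (\<integral>\<^sup>+\<omega>. indicator (S d) \<omega> * ennreal (EM a (tt d) \<omega>) \<partial>M)"
        using nn_integral_cmult[OF m, of "w d"] by (simp add: mult.left_commute)
    qed
    finally show ?thesis .
  qed
  have "(\<integral>\<^sup>+\<omega>. (if \<tau> \<omega> = \<infinity> then 0 else w (real_of_ereal (\<tau> \<omega>)) * ennreal (EM a (real_of_ereal (\<tau> \<omega>) + hh (real_of_ereal (\<tau> \<omega>))) \<omega>)) \<partial>M)
      = (\<Sum>d\<in>D. w d * (\<integral>\<^sup>+\<omega>. indicator (S d) \<omega> * ennreal (EM a (d + hh d) \<omega>) \<partial>M))"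
  proof -
    have h1: "\<forall>d\<in>D. 0 \<le> d + hh d" using hh D by auto
    show ?thesis using intsum[of "\<lambda>d. d + hh d", OF h1] .
  qed
  also have "\<dots> = (\<Sum>d\<in>D. w d * (\<integral>\<^sup>+\<omega>. indicator (S d) \<omega> * ennreal (EM a d \<omega>) \<partial>M))"
  proof (intro sum.cong refl arg_cong2[where f="(*)"])
    fix d assume d: "d \<in> D"
    show "(\<integral>\<^sup>+\<omega>. indicator (S d) \<omega> * ennreal (EM a (d + hh d) \<omega>) \<partial>M) = (\<integral>\<^sup>+\<omega>. indicator (S d) \<omega> * ennreal (EM a d \<omega>) \<partial>M)"
      using mart[of d "hh d" "S d" a] SF[OF d] d D hh by auto
  qed
  also have "\<dots> = (\<integral>\<^sup>+\<omega>. (if \<tau> \<omega> = \<infinity> then 0 else w (real_of_ereal (\<tau> \<omega>)) * ennreal (EM a (real_of_ereal (\<tau> \<omega>)) \<omega>)) \<partial>M)"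
  proof -
    have h1: "\<forall>d\<in>D. 0 \<le> d" using D by auto
    show ?thesis using intsum[of "\<lambda>d. d", OF h1] by (rule sym)
  qed
  finally show ?thesis .
qed

definition Bm :: "real \<Rightarrow> 'a \<Rightarrow> real" where "Bm t \<omega> = B (max 0 t) \<omega>"

lemma Bm_joint: "(\<lambda>(\<omega>, t). Bm t \<omega>) \<in> borel_measurable (M \<Otimes>\<^sub>M lborel)"
proof -
  define G where "G n = (\<lambda>p::'a \<times> real. B (max 0 (real_of_int \<lfloor>2^n * snd p\<rfloor> / 2^n)) (fst p))" for n :: nat
  have Gm: "G n \<in> borel_measurable (M \<Otimes>\<^sub>M lborel)" for n
  proof -
    have fi: "(\<lambda>p::'a \<times> real. B (max 0 (real_of_int i / 2^n)) (fst p)) \<in> borel_measurable (M \<Otimes>\<^sub>M lborel)" for i :: int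
      by (intro measurable_compose[OF measurable_fst B_meas]) simp
    have gm: "(\<lambda>p::'a \<times> real. \<lfloor>2^n * snd p\<rfloor>) \<in> M \<Otimes>\<^sub>M lborel \<rightarrow>\<^sub>M count_space UNIV"
      by measurable
    note measurable_compose_countable[OF fi gm]
    then show ?thesis unfolding G_def by simp
  qed
  show ?thesis
  proof (rule borel_measurable_LIMSEQ_real[OF _ Gm])
    fix p :: "'a \<times> real" assume "p \<in> space (M \<Otimes>\<^sub>M lborel)"
    then have om: "fst p \<in> space M" by (auto simp: space_pair_measure)
    have lim: "(\<lambda>n. max 0 (real_of_int \<lfloor>2^n * snd p\<rfloor> / 2^n)) \<longlonglongrightarrow> max 0 (snd p)"
      by (intro tendsto_max tendsto_const dyadic_floor_lim)
    have "(\<lambda>n. B (max 0 (real_of_int \<lfloor>2^n * snd p\<rfloor> / 2^n)) (fst p)) \<longlonglongrightarrow> B (max 0 (snd p)) (fst p)"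
      by (rule continuous_on_tendsto_compose[OF Bcont[OF om] lim]) auto
    then show "(\<lambda>n. G n p) \<longlonglongrightarrow> (case p of (\<omega>, t) \<Rightarrow> Bm t \<omega>)"
      unfolding G_def Bm_def by (simp add: case_prod_beta)
  qed
qed

lemma to_lborel: "u \<in> borel_measurable N \<Longrightarrow> u \<in> measurable N lborel"
  using measurable_cong_sets[OF refl sets_lborel] by blast

lemma Bm_comp: assumes u: "u \<in> borel_measurable M" shows "(\<lambda>\<omega>. Bm (u \<omega>) \<omega>) \<in> borel_measurable M"
  using measurable_Pair_compose_split[OF Bm_joint measurable_ident_sets[OF refl] to_lborel[OF u]] by simp

lemma EM_comp:
  assumes u: "u \<in> borel_measurable M" and nn: "\<And>\<omega>. \<omega> \<in> space M \<Longrightarrow> 0 \<le> u \<omega>"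
  shows "(\<lambda>\<omega>. EM a (u \<omega>) \<omega>) \<in> borel_measurable M"
proof -
  have "(\<lambda>\<omega>. exp (a * Bm (u \<omega>) \<omega> - a\<^sup>2 * u \<omega> / 2)) \<in> borel_measurable M"
    using Bm_comp[OF u] u by measurable
  then show ?thesis
    by (rule measurable_cong[THEN iffD1, rotated]) (simp add: EM_def Bm_def nn max_def)
qed

definition dy :: "nat \<Rightarrow> ereal \<Rightarrow> ereal" where
  "dy n e = (if e = \<infinity> then \<infinity> else ereal (real_of_int \<lceil>2^n * real_of_ereal e\<rceil> / 2^n))"

lemma dy_inf[simp]: "dy n e = \<infinity> \<longleftrightarrow> e = \<infinity>" by (simp add: dy_def)

lemma dy_nonneg: "0 \<le> (x::real) \<Longrightarrow> 0 \<le> real_of_int \<lceil>2^n * x\<rceil> / (2::real)^n"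
  using dyadic_ceil_ge[of x n] by linarith

lemma dy_stop: assumes st: "stopping_time_inf M F \<tau>" shows "stopping_time_inf M F (\<lambda>\<omega>. dy n (\<tau> \<omega>))"
  unfolding stopping_time_inf_def
proof safe
  fix \<omega> assume om: "\<omega> \<in> space M"
  show "0 \<le> dy n (\<tau> \<omega>)"
  proof (cases "\<tau> \<omega> = \<infinity>")
    case False
    have "0 \<le> real_of_ereal (\<tau> \<omega>)" using stop_nonneg[OF st om] by (simp add: real_of_ereal_pos)
    then show ?thesis using False dy_nonneg by (simp add: dy_def)
  qed (simp add: dy_def)
next
  fix t :: real assume t: "0 \<le> t"
  define t' where "t' = real_of_int \<lfloor>2^n * t\<rfloor> / 2^n"
  have t'0: "0 \<le> t'" using t by (simp add: t'_def)
  have t't: "t' \<le> t"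
  proof -
    have "real_of_int \<lfloor>2^n * t\<rfloor> \<le> 2^n * t" by linarith
    then show ?thesis by (simp add: t'_def field_simps)
  qed
  have eq: "{\<omega>\<in>space M. dy n (\<tau> \<omega>) \<le> ereal t} = {\<omega>\<in>space M. \<tau> \<omega> \<le> ereal t'}"
  proof (intro Collect_cong conj_cong refl)
    fix \<omega> assume om: "\<omega> \<in> space M"
    show "dy n (\<tau> \<omega>) \<le> ereal t \<longleftrightarrow> \<tau> \<omega> \<le> ereal t'"
    proof (cases "\<tau> \<omega> = \<infinity>")
      case True then show ?thesis by (simp add: dy_def)
    next
      case False
      with stop_nonneg[OF st om] obtain x where x: "\<tau> \<omega> = ereal x" by (cases "\<tau> \<omega>") auto
      show ?thesis using dyadic_ceil_le_iff[of n x t] by (simp add: dy_def x t'_def)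
    qed
  qed
  have "{\<omega>\<in>space M. \<tau> \<omega> \<le> ereal t'} \<in> sets (F t)"
    using stop_le[OF st t'0] F_mono[OF t'0 t't] by blast
  then show "{\<omega>\<in>space M. dy n (\<tau> \<omega>) \<le> ereal t} \<in> sets (F t)" unfolding eq .
qed

definition DS :: "nat \<Rightarrow> real \<Rightarrow> real set" where
  "DS n N = (\<lambda>k::nat. real k / 2^n) ` {..nat \<lceil>2^n * N\<rceil>}"

lemma DS_finite: "finite (DS n N)" by (simp add: DS_def)
lemma DS_nonneg: "DS n N \<subseteq> {0..}" by (auto simp: DS_def)
lemma DS_le: assumes "0 \<le> N" "d \<in> DS n N" shows "d \<le> N + 1"
proof -
  obtain k :: nat where k: "k \<le> nat \<lceil>2^n * N\<rceil>" "d = real k / 2^n" using assms by (auto simp: DS_def)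
  have "0 \<le> 2^n * N" using assms(1) by simp
  then have c0: "0 \<le> \<lceil>2^n * N\<rceil>" by simp
  have "int k \<le> \<lceil>2^n * N\<rceil>" using k(1) c0 by linarith
  then have "real k \<le> real_of_int \<lceil>2^n * N\<rceil>" by (metis of_int_le_iff of_int_of_nat_eq)
  also have "\<dots> \<le> 2^n * N + 1" by linarith
  finally have "real k / 2^n \<le> (2^n * N + 1) / 2^n" by (simp add: divide_right_mono)
  also have "\<dots> = N + 1 / 2^n" by (simp add: field_simps)
  also have "\<dots> \<le> N + 1" by simp
  finally show ?thesis using k by simp
qed

lemma dy_vals:
  assumes N: "0 \<le> N" and e: "e = \<infinity> \<or> (0 \<le> e \<and> e \<le> ereal N)"
  shows "dy n e = \<infinity> \<or> dy n e \<in> ereal ` DS n N"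
proof (cases "e = \<infinity>")
  case False
  with e obtain x where x: "e = ereal x" "0 \<le> x" "x \<le> N" by (cases e) auto
  define k where "k = nat \<lceil>2^n * x\<rceil>"
  have "0 \<le> 2^n * x" using x by simp
  then have "0 \<le> \<lceil>2^n * x\<rceil>" by simp
  then have kk: "real k = real_of_int \<lceil>2^n * x\<rceil>" by (simp add: k_def)
  have "\<lceil>2^n * x\<rceil> \<le> \<lceil>2^n * N\<rceil>" using x by (intro ceiling_mono) simp
  then have "k \<le> nat \<lceil>2^n * N\<rceil>" unfolding k_def by (rule nat_mono)
  then have "real k / 2^n \<in> DS n N" by (auto simp: DS_def)
  then show ?thesis using x kk by (simp add: dy_def)
qed simp

definition Phi :: "real \<Rightarrow> real \<Rightarrow> ('a \<Rightarrow> ereal) \<Rightarrow> real \<Rightarrow> 'a \<Rightarrow> real" where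
  "Phi c a \<rho> s \<omega> = (if \<rho> \<omega> = \<infinity> then 0 else exp (c * real_of_ereal (\<rho> \<omega>)) * EM a (real_of_ereal (\<rho> \<omega>) + s) \<omega>)"

lemma Phi_nonneg: "0 \<le> Phi c a \<rho> s \<omega>"
  using Ex_pos[of a] by (simp add: Phi_def less_imp_le)

lemma T_nonneg: "stopping_time_inf M F \<rho> \<Longrightarrow> \<omega> \<in> space M \<Longrightarrow> 0 \<le> real_of_ereal (\<rho> \<omega>)"
  using stop_nonneg by (simp add: real_of_ereal_pos)

lemma Phi_meas: assumes st: "stopping_time_inf M F \<rho>" and s: "0 \<le> s"
  shows "Phi c a \<rho> s \<in> borel_measurable M"
proof -
  have rm[measurable]: "\<rho> \<in> borel_measurable M" by (rule stop_meas[OF st])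
  have em[measurable]: "(\<lambda>\<omega>. EM a (real_of_ereal (\<rho> \<omega>) + s) \<omega>) \<in> borel_measurable M"
    by (rule EM_comp) (use T_nonneg[OF st] s in auto)
  show ?thesis unfolding Phi_def[abs_def] by measurable
qed

lemma Phi_enn: "ennreal (Phi c a \<rho> s \<omega>) = (if \<rho> \<omega> = \<infinity> then 0 else ennreal (exp (c * real_of_ereal (\<rho> \<omega>))) * ennreal (EM a (real_of_ereal (\<rho> \<omega>) + s) \<omega>))"
  by (simp add: Phi_def ennreal_mult')

lemma EM_sq: "(EM a t \<omega>)^2 = EM (2*a) t \<omega> * exp (a^2 * t)"
proof -
  define A where "A = a * B t \<omega> - a\<^sup>2 * t / 2"
  define Q where "Q = 2*a * B t \<omega> - (2*a)\<^sup>2 * t / 2"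
  have e: "A + A = Q + a^2 * t" by (simp add: A_def Q_def power2_eq_square algebra_simps)
  have 1: "(EM a t \<omega>)^2 = exp (A + A)" unfolding exp_add EM_def A_def by (simp only: power2_eq_square)
  have 2: "EM (2*a) t \<omega> * exp (a^2 * t) = exp (Q + a^2 * t)" unfolding exp_add EM_def Q_def ..
  show ?thesis using 1 2 e by simp
qed

lemma EM_int1: assumes "0 \<le> L" shows "(\<integral>\<^sup>+\<omega>. ennreal (EM b L \<omega>) \<partial>M) = 1"
proof -
  have sp: "space M \<in> sets (F 0)" using F_space[of 0] sets.top[of "F 0"] by simp
  have "(\<integral>\<^sup>+\<omega>. ennreal (EM b L \<omega>) \<partial>M) = (\<integral>\<^sup>+\<omega>. indicator (space M) \<omega> * ennreal (EM b (0 + L) \<omega>) \<partial>M)"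
    by (intro nn_integral_cong) simp
  also have "\<dots> = (\<integral>\<^sup>+\<omega>. indicator (space M) \<omega> * ennreal (EM b 0 \<omega>) \<partial>M)"
    by (rule mart[OF order_refl assms sp])
  also have "\<dots> = (\<integral>\<^sup>+\<omega>. 1 \<partial>M)"
    by (intro nn_integral_cong) (simp add: Ex0)
  also have "\<dots> = 1" by (simp add: emeasure_space_1)
  finally show ?thesis .
qed

lemma opt_bdd:
  assumes st: "stopping_time_inf M F \<tau>" and N: "0 \<le> N" and bd: "\<forall>\<omega>\<in>space M. \<tau> \<omega> = \<infinity> \<or> \<tau> \<omega> \<le> ereal N"
    and s: "0 \<le> s" and c: "c \<le> 0"
  shows "(\<integral>\<^sup>+\<omega>. ennreal (Phi c a \<tau> s \<omega>) \<partial>M) = (\<integral>\<^sup>+\<omega>. ennreal (Phi c a \<tau> 0 \<omega>) \<partial>M)"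
proof -
  define \<rho> where "\<rho> k \<omega> = dy k (\<tau> \<omega>)" for k \<omega>
  have stk: "stopping_time_inf M F (\<rho> k)" for k unfolding \<rho>_def by (rule dy_stop[OF st])
  have valsk: "\<forall>\<omega>\<in>space M. \<rho> k \<omega> = \<infinity> \<or> \<rho> k \<omega> \<in> ereal ` DS k N" for k
  proof
    fix \<omega> assume om: "\<omega> \<in> space M"
    show "\<rho> k \<omega> = \<infinity> \<or> \<rho> k \<omega> \<in> ereal ` DS k N"
      unfolding \<rho>_def by (rule dy_vals[OF N]) (use bd om stop_nonneg[OF st om] in auto)
  qed
  have Tle: "real_of_ereal (\<rho> k \<omega>) \<le> N + 1" if "\<omega> \<in> space M" "\<rho> k \<omega> \<noteq> \<infinity>" for k \<omega>
    using valsk[of k] that DS_le[OF N] by auto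
  have disc: "(\<integral>\<^sup>+\<omega>. ennreal (Phi c a (\<rho> k) u \<omega>) \<partial>M) = (\<integral>\<^sup>+\<omega>. ennreal (Phi c a (\<rho> k) 0 \<omega>) \<partial>M)"
    if u: "0 \<le> u" for k u
  proof -
    have "(\<integral>\<^sup>+\<omega>. ennreal (Phi c a (\<rho> k) u \<omega>) \<partial>M)
       = (\<integral>\<^sup>+\<omega>. (if \<rho> k \<omega> = \<infinity> then 0 else ennreal (exp (c * real_of_ereal (\<rho> k \<omega>))) * ennreal (EM a (real_of_ereal (\<rho> k \<omega>) + (\<lambda>_. u) (real_of_ereal (\<rho> k \<omega>))) \<omega>)) \<partial>M)"
      by (intro nn_integral_cong) (simp add: Phi_enn)
    also have "\<dots> = (\<integral>\<^sup>+\<omega>. (if \<rho> k \<omega> = \<infinity> then 0 else ennreal (exp (c * real_of_ereal (\<rho> k \<omega>))) * ennreal (EM a (real_of_ereal (\<rho> k \<omega>)) \<omega>)) \<partial>M)"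
      by (rule disc_opt[OF stk DS_finite DS_nonneg valsk]) (use u in simp)
    also have "\<dots> = (\<integral>\<^sup>+\<omega>. ennreal (Phi c a (\<rho> k) 0 \<omega>) \<partial>M)"
      by (intro nn_integral_cong) (simp add: Phi_enn)
    finally show ?thesis .
  qed
  have bound: "(\<integral>\<^sup>+\<omega>. ennreal ((Phi c a (\<rho> k) u \<omega>)^2) \<partial>M) \<le> ennreal (exp (a^2 * (N+1+u)))"
    if u: "0 \<le> u" for k u
  proof -
    define L where "L = N + 1 + u"
    have L0: "0 \<le> L" using N u by (simp add: L_def)
    have pw: "ennreal ((Phi c a (\<rho> k) u \<omega>)^2) \<le> ennreal (exp (a^2 * L)) * (if \<rho> k \<omega> = \<infinity> then 0 else ennreal (EM (2*a) (real_of_ereal (\<rho> k \<omega>) + u) \<omega>))"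
      if om: "\<omega> \<in> space M" for \<omega>
    proof (cases "\<rho> k \<omega> = \<infinity>")
      case True then show ?thesis by (simp add: Phi_def)
    next
      case False
      define T where "T = real_of_ereal (\<rho> k \<omega>)"
      have T0: "0 \<le> T" using T_nonneg[OF stk om] by (simp add: T_def)
      have TL: "T + u \<le> L" using Tle[OF om False] by (simp add: T_def L_def)
      have e1: "(exp (c * T))^2 \<le> 1"
      proof -
        have "c * T \<le> 0" using c T0 by (simp add: mult_nonpos_nonneg)
        then have "exp (c * T) \<le> 1" by simp
        moreover have "0 \<le> exp (c * T)" by simp
        ultimately show ?thesis by (simp add: power_le_one)
      qed
      have "(Phi c a (\<rho> k) u \<omega>)^2 = (exp (c * T))^2 * (EM a (T + u) \<omega>)^2"
        using False by (simp add: Phi_def T_def power_mult_distrib)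
      also have "\<dots> \<le> 1 * (EM a (T + u) \<omega>)^2"
        by (intro mult_right_mono e1) simp
      also have "\<dots> = EM (2*a) (T + u) \<omega> * exp (a^2 * (T + u))" by (simp add: EM_sq)
      also have "\<dots> \<le> EM (2*a) (T + u) \<omega> * exp (a^2 * L)"
      proof (rule mult_left_mono)
        have "a^2 * (T + u) \<le> a^2 * L" using TL by (intro mult_left_mono) simp_all
        then show "exp (a^2 * (T + u)) \<le> exp (a^2 * L)" by simp
        show "0 \<le> EM (2*a) (T + u) \<omega>" using Ex_pos[of "2*a"] by (simp add: less_imp_le)
      qed
      finally have "(Phi c a (\<rho> k) u \<omega>)^2 \<le> exp (a^2 * L) * EM (2*a) (T + u) \<omega>" by (simp add: mult.commute)
      then have "ennreal ((Phi c a (\<rho> k) u \<omega>)^2) \<le> ennreal (exp (a^2 * L) * EM (2*a) (T + u) \<omega>)"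
        by (rule ennreal_leI)
      then show ?thesis using False by (simp add: T_def ennreal_mult')
    qed
    have i1: "(\<integral>\<^sup>+\<omega>. (if \<rho> k \<omega> = \<infinity> then 0 else ennreal (EM (2*a) (real_of_ereal (\<rho> k \<omega>) + u) \<omega>)) \<partial>M) \<le> 1"
    proof -
      have "(\<integral>\<^sup>+\<omega>. (if \<rho> k \<omega> = \<infinity> then 0 else ennreal (EM (2*a) (real_of_ereal (\<rho> k \<omega>) + u) \<omega>)) \<partial>M)
        = (\<integral>\<^sup>+\<omega>. (if \<rho> k \<omega> = \<infinity> then 0 else (\<lambda>_. 1) (real_of_ereal (\<rho> k \<omega>)) * ennreal (EM (2*a) (real_of_ereal (\<rho> k \<omega>) + (\<lambda>_. u) (real_of_ereal (\<rho> k \<omega>))) \<omega>)) \<partial>M)"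
        by (intro nn_integral_cong) simp
      also have "\<dots> = (\<integral>\<^sup>+\<omega>. (if \<rho> k \<omega> = \<infinity> then 0 else (\<lambda>_. 1) (real_of_ereal (\<rho> k \<omega>)) * ennreal (EM (2*a) (real_of_ereal (\<rho> k \<omega>)) \<omega>)) \<partial>M)"
        by (rule disc_opt[OF stk DS_finite DS_nonneg valsk]) (use u in simp)
      also have "\<dots> = (\<integral>\<^sup>+\<omega>. (if \<rho> k \<omega> = \<infinity> then 0 else (\<lambda>_. 1) (real_of_ereal (\<rho> k \<omega>)) * ennreal (EM (2*a) (real_of_ereal (\<rho> k \<omega>) + (\<lambda>d. L - d) (real_of_ereal (\<rho> k \<omega>))) \<omega>)) \<partial>M)"
      proof (rule disc_opt[OF stk DS_finite DS_nonneg valsk, symmetric])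
        show "\<forall>d\<in>DS k N. 0 \<le> L - d"
        proof
          fix d assume "d \<in> DS k N"
          then have "d \<le> N + 1" by (rule DS_le[OF N])
          then show "0 \<le> L - d" using u by (simp add: L_def)
        qed
      qed
      also have "\<dots> = (\<integral>\<^sup>+\<omega>. (if \<rho> k \<omega> = \<infinity> then 0 else ennreal (EM (2*a) L \<omega>)) \<partial>M)"
        by (intro nn_integral_cong) simp
      also have "\<dots> \<le> (\<integral>\<^sup>+\<omega>. ennreal (EM (2*a) L \<omega>) \<partial>M)"
        by (intro nn_integral_mono) simp
      also have "\<dots> = 1" by (rule EM_int1[OF L0])
      finally show ?thesis .
    qed
    have "(\<integral>\<^sup>+\<omega>. ennreal ((Phi c a (\<rho> k) u \<omega>)^2) \<partial>M)
        \<le> (\<integral>\<^sup>+\<omega>. ennreal (exp (a^2 * L)) * (if \<rho> k \<omega> = \<infinity> then 0 else ennreal (EM (2*a) (real_of_ereal (\<rho> k \<omega>) + u) \<omega>)) \<partial>M)"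
      by (intro nn_integral_mono pw)
    also have "\<dots> = ennreal (exp (a^2 * L)) * (\<integral>\<^sup>+\<omega>. (if \<rho> k \<omega> = \<infinity> then 0 else ennreal (EM (2*a) (real_of_ereal (\<rho> k \<omega>) + u) \<omega>)) \<partial>M)"
    proof (rule nn_integral_cmult)
      have rm[measurable]: "\<rho> k \<in> borel_measurable M" by (rule stop_meas[OF stk])
      have em[measurable]: "(\<lambda>\<omega>. EM (2*a) (real_of_ereal (\<rho> k \<omega>) + u) \<omega>) \<in> borel_measurable M"
        by (rule EM_comp) (use T_nonneg[OF stk] u in auto)
      show "(\<lambda>\<omega>. if \<rho> k \<omega> = \<infinity> then 0 else ennreal (EM (2*a) (real_of_ereal (\<rho> k \<omega>) + u) \<omega>)) \<in> borel_measurable M"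
        by measurable
    qed
    also have "\<dots> \<le> ennreal (exp (a^2 * L)) * 1"
      by (intro mult_left_mono i1) simp
    finally show ?thesis by (simp add: L_def)
  qed
  have conv: "(\<lambda>k. Phi c a (\<rho> k) u \<omega>) \<longlonglongrightarrow> Phi c a \<tau> u \<omega>" if om: "\<omega> \<in> space M" and u: "0 \<le> u" for \<omega> u
  proof (cases "\<tau> \<omega> = \<infinity>")
    case True then show ?thesis by (simp add: Phi_def \<rho>_def)
  next
    case False
    with stop_nonneg[OF st om] obtain x where x: "\<tau> \<omega> = ereal x" by (cases "\<tau> \<omega>") auto
    have x0: "0 \<le> x" using stop_nonneg[OF st om] x by simp
    have cB: "continuous_on {0..} (\<lambda>y. B (y + u) \<omega>)"
      by (rule continuous_on_compose2[OF Bcont[OF om]]) (auto intro!: continuous_intros simp: u)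
    have cont: "continuous_on {0..} (\<lambda>y. exp (c * y) * exp (a * B (y + u) \<omega> - a\<^sup>2 * (y + u) / 2))"
      by (intro continuous_intros cB) auto
    have lim: "(\<lambda>k. real_of_int \<lceil>2^k * x\<rceil> / 2^k) \<longlonglongrightarrow> x" by (rule dyadic_ceil_lim)
    have "(\<lambda>k. exp (c * (real_of_int \<lceil>2^k * x\<rceil> / 2^k)) * exp (a * B (real_of_int \<lceil>2^k * x\<rceil> / 2^k + u) \<omega> - a\<^sup>2 * (real_of_int \<lceil>2^k * x\<rceil> / 2^k + u) / 2))
      \<longlonglongrightarrow> exp (c * x) * exp (a * B (x + u) \<omega> - a\<^sup>2 * (x + u) / 2)"
      by (rule continuous_on_tendsto_compose[OF cont lim]) (use x0 dy_nonneg in auto)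
    then show ?thesis using x by (simp add: Phi_def \<rho>_def dy_def EM_def)
  qed
  have lim_u: "(\<lambda>k. \<integral>\<^sup>+\<omega>. ennreal (Phi c a (\<rho> k) u \<omega>) \<partial>M) \<longlonglongrightarrow> (\<integral>\<^sup>+\<omega>. ennreal (Phi c a \<tau> u \<omega>) \<partial>M)"
    if u: "0 \<le> u" for u
  proof (rule ui_conv)
    show "Phi c a (\<rho> k) u \<in> borel_measurable M" for k by (rule Phi_meas[OF stk u])
    show "Phi c a \<tau> u \<in> borel_measurable M" by (rule Phi_meas[OF st u])
    show "0 \<le> Phi c a (\<rho> k) u x" for k x by (rule Phi_nonneg)
    show "(\<lambda>k. Phi c a (\<rho> k) u x) \<longlonglongrightarrow> Phi c a \<tau> u x" if "x \<in> space M" for x by (rule conv[OF that u])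
    show "0 \<le> exp (a^2 * (N+1+u))" by simp
    show "(\<integral>\<^sup>+x. ennreal ((Phi c a (\<rho> k) u x)^2) \<partial>M) \<le> ennreal (exp (a^2 * (N+1+u)))" for k
      by (rule bound[OF u])
  qed
  have "(\<lambda>k. \<integral>\<^sup>+\<omega>. ennreal (Phi c a (\<rho> k) 0 \<omega>) \<partial>M) \<longlonglongrightarrow> (\<integral>\<^sup>+\<omega>. ennreal (Phi c a \<tau> s \<omega>) \<partial>M)"
    using lim_u[OF s] disc[OF s] by simp
  moreover have "(\<lambda>k. \<integral>\<^sup>+\<omega>. ennreal (Phi c a (\<rho> k) 0 \<omega>) \<partial>M) \<longlonglongrightarrow> (\<integral>\<^sup>+\<omega>. ennreal (Phi c a \<tau> 0 \<omega>) \<partial>M)"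
    using lim_u[of 0] by simp
  ultimately show ?thesis by (rule LIMSEQ_unique)
qed

lemma opt_gen:
  assumes st: "stopping_time_inf M F \<tau>" and s: "0 \<le> s" and c: "c \<le> 0"
  shows "(\<integral>\<^sup>+\<omega>. ennreal (Phi c a \<tau> s \<omega>) \<partial>M) = (\<integral>\<^sup>+\<omega>. ennreal (Phi c a \<tau> 0 \<omega>) \<partial>M)"
proof -
  define \<tau>N where "\<tau>N N \<omega> = (if \<tau> \<omega> \<le> ereal (real N) then \<tau> \<omega> else \<infinity>)" for N :: nat and \<omega>
  have stN: "stopping_time_inf M F (\<tau>N N)" for N
    unfolding stopping_time_inf_def
  proof safe
    fix \<omega> assume "\<omega> \<in> space M"
    then show "0 \<le> \<tau>N N \<omega>" using stop_nonneg[OF st] by (simp add: \<tau>N_def)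
  next
    fix t :: real assume t: "0 \<le> t"
    define m where "m = min t (real N)"
    have m0: "0 \<le> m" "m \<le> t" using t by (auto simp: m_def)
    have "{\<omega>\<in>space M. \<tau>N N \<omega> \<le> ereal t} = {\<omega>\<in>space M. \<tau> \<omega> \<le> ereal m}"
      by (auto simp: \<tau>N_def m_def min_def split: if_splits intro: order_trans)
    moreover have "{\<omega>\<in>space M. \<tau> \<omega> \<le> ereal m} \<in> sets (F t)"
      using stop_le[OF st m0(1)] F_mono[OF m0] by blast
    ultimately show "{\<omega>\<in>space M. \<tau>N N \<omega> \<le> ereal t} \<in> sets (F t)" by simp
  qed
  have bdN: "\<forall>\<omega>\<in>space M. \<tau>N N \<omega> = \<infinity> \<or> \<tau>N N \<omega> \<le> ereal (real N)" for N
    by (simp add: \<tau>N_def)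
  have PhiN: "Phi c a (\<tau>N N) u \<omega> = (if \<tau> \<omega> \<le> ereal (real N) then Phi c a \<tau> u \<omega> else 0)" for N u \<omega>
    by (simp add: Phi_def \<tau>N_def)
  have lim: "(\<lambda>N. \<integral>\<^sup>+\<omega>. ennreal (Phi c a (\<tau>N N) u \<omega>) \<partial>M) \<longlonglongrightarrow> (\<integral>\<^sup>+\<omega>. ennreal (Phi c a \<tau> u \<omega>) \<partial>M)"
    if u: "0 \<le> u" for u
  proof (rule nn_integral_LIMSEQ)
    show "incseq (\<lambda>N \<omega>. ennreal (Phi c a (\<tau>N N) u \<omega>))"
    proof (rule incseq_SucI, rule le_funI)
      fix N \<omega>
      have "\<tau> \<omega> \<le> ereal (real N) \<Longrightarrow> \<tau> \<omega> \<le> ereal (real (Suc N))"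
        using order_trans[of "\<tau> \<omega>" "ereal (real N)" "ereal (real (Suc N))"] by simp
      then show "ennreal (Phi c a (\<tau>N N) u \<omega>) \<le> ennreal (Phi c a (\<tau>N (Suc N)) u \<omega>)"
        unfolding PhiN using Phi_nonneg[of c a \<tau> u \<omega>] by (auto intro: ennreal_leI)
    qed
    show "(\<lambda>\<omega>. ennreal (Phi c a (\<tau>N N) u \<omega>)) \<in> borel_measurable M" for N
      using Phi_meas[OF stN u] by measurable
    fix \<omega>
    show "(\<lambda>N. ennreal (Phi c a (\<tau>N N) u \<omega>)) \<longlonglongrightarrow> ennreal (Phi c a \<tau> u \<omega>)"
    proof (cases "\<tau> \<omega> = \<infinity>")
      case True
      then show ?thesis unfolding PhiN by (simp add: Phi_def)
    next
      case False
      have "\<exists>N0::nat. \<tau> \<omega> \<le> ereal (real N0)"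
      proof (cases "\<tau> \<omega>")
        case (real x)
        obtain N0 :: nat where "x \<le> real N0" using real_arch_simple by blast
        then show ?thesis using real by auto
      qed (use False in auto)
      then obtain N0 :: nat where N0: "\<tau> \<omega> \<le> ereal (real N0)" by blast
      have "\<forall>\<^sub>F N in sequentially. ennreal (Phi c a (\<tau>N N) u \<omega>) = ennreal (Phi c a \<tau> u \<omega>)"
      proof (rule eventually_sequentiallyI[of N0])
        fix N assume "N0 \<le> N"
        then have "\<tau> \<omega> \<le> ereal (real N)" using N0 by (rule_tac order_trans[OF N0]) simp
        then show "ennreal (Phi c a (\<tau>N N) u \<omega>) = ennreal (Phi c a \<tau> u \<omega>)" by (simp add: PhiN)
      qed
      then show ?thesis by (rule tendsto_eventually)
    qed
  qed
  have "(\<lambda>N. \<integral>\<^sup>+\<omega>. ennreal (Phi c a (\<tau>N N) 0 \<omega>) \<partial>M) \<longlonglongrightarrow> (\<integral>\<^sup>+\<omega>. ennreal (Phi c a \<tau> s \<omega>) \<partial>M)"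
    using lim[OF s] opt_bdd[OF stN _ bdN s c] by simp
  moreover have "(\<lambda>N. \<integral>\<^sup>+\<omega>. ennreal (Phi c a (\<tau>N N) 0 \<omega>) \<partial>M) \<longlonglongrightarrow> (\<integral>\<^sup>+\<omega>. ennreal (Phi c a \<tau> 0 \<omega>) \<partial>M)"
    using lim[of 0] by simp
  ultimately show ?thesis by (rule LIMSEQ_unique)
qed

lemma gbm_EM: "exp (-r*t) * gbm \<mu> \<sigma> p B t \<omega> = p * exp ((\<mu>-r)*t) * EM \<sigma> t \<omega>"
proof -
  have e: "-r*t + ((\<mu> - \<sigma>\<^sup>2/2)*t + \<sigma>*B t \<omega>) = (\<mu>-r)*t + (\<sigma>*B t \<omega> - \<sigma>\<^sup>2*t/2)"
    by (simp add: algebra_simps)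
  have "exp (-r*t) * gbm \<mu> \<sigma> p B t \<omega> = p * exp (-r*t + ((\<mu> - \<sigma>\<^sup>2/2)*t + \<sigma>*B t \<omega>))"
    unfolding gbm_def exp_add by (simp add: mult_ac)
  also have "\<dots> = p * exp ((\<mu>-r)*t + (\<sigma>*B t \<omega> - \<sigma>\<^sup>2*t/2))" unfolding e ..
  also have "\<dots> = p * exp ((\<mu>-r)*t) * EM \<sigma> t \<omega>"
    unfolding exp_add EM_def by (simp add: mult_ac)
  finally show ?thesis .
qed

definition Xs :: "real \<Rightarrow> real \<Rightarrow> real \<Rightarrow> real \<Rightarrow> ('a \<Rightarrow> ereal) \<Rightarrow> real \<Rightarrow> 'a \<Rightarrow> real" where
  "Xs \<mu> \<sigma> r p \<tau> s \<omega> = (if \<tau> \<omega> = \<infinity> then 0 else exp (-r * (real_of_ereal (\<tau> \<omega>) + s)) * gbm \<mu> \<sigma> p B (real_of_ereal (\<tau> \<omega>) + s) \<omega>)"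

lemma Xs_Phi: "Xs \<mu> \<sigma> r p \<tau> s \<omega> = p * exp ((\<mu> - r) * s) * Phi (\<mu>-r) \<sigma> \<tau> s \<omega>"
proof (cases "\<tau> \<omega> = \<infinity>")
  case True then show ?thesis by (simp add: Xs_def Phi_def)
next
  case False
  define T where "T = real_of_ereal (\<tau> \<omega>)"
  have "Xs \<mu> \<sigma> r p \<tau> s \<omega> = p * exp ((\<mu> - r) * (T + s)) * EM \<sigma> (T+s) \<omega>"
    using False gbm_EM[of r "T+s"] by (simp add: Xs_def T_def)
  also have "\<dots> = p * exp ((\<mu> - r) * s) * (exp ((\<mu> - r) * T) * EM \<sigma> (T+s) \<omega>)"
    by (simp add: distrib_left exp_add mult_ac)
  also have "\<dots> = p * exp ((\<mu> - r) * s) * Phi (\<mu>-r) \<sigma> \<tau> s \<omega>"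
    using False by (simp add: Phi_def T_def)
  finally show ?thesis .
qed

lemma Xs_shift:
  assumes st: "stopping_time_inf M F \<tau>" and s: "0 \<le> s" and mr: "\<mu> \<le> r" and p: "0 \<le> p"
  shows "(\<integral>\<^sup>+\<omega>. ennreal (Xs \<mu> \<sigma> r p \<tau> s \<omega>) \<partial>M) = ennreal (exp ((\<mu> - r) * s)) * (\<integral>\<^sup>+\<omega>. ennreal (Xs \<mu> \<sigma> r p \<tau> 0 \<omega>) \<partial>M)"
proof -
  have c: "\<mu> - r \<le> 0" using mr by simp
  have "(\<integral>\<^sup>+\<omega>. ennreal (Xs \<mu> \<sigma> r p \<tau> s \<omega>) \<partial>M) = (\<integral>\<^sup>+\<omega>. ennreal (p * exp ((\<mu> - r) * s)) * ennreal (Phi (\<mu>-r) \<sigma> \<tau> s \<omega>) \<partial>M)"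
    using p Phi_nonneg by (intro nn_integral_cong) (simp add: Xs_Phi ennreal_mult')
  also have "\<dots> = ennreal (p * exp ((\<mu> - r) * s)) * (\<integral>\<^sup>+\<omega>. ennreal (Phi (\<mu>-r) \<sigma> \<tau> s \<omega>) \<partial>M)"
    by (rule nn_integral_cmult) (use Phi_meas[OF st s] in measurable)
  also have "\<dots> = ennreal (p * exp ((\<mu> - r) * s)) * (\<integral>\<^sup>+\<omega>. ennreal (Phi (\<mu>-r) \<sigma> \<tau> 0 \<omega>) \<partial>M)"
    using opt_gen[OF st s c] by simp
  also have "\<dots> = ennreal (exp ((\<mu> - r) * s)) * (ennreal p * (\<integral>\<^sup>+\<omega>. ennreal (Phi (\<mu>-r) \<sigma> \<tau> 0 \<omega>) \<partial>M))"
    using p by (simp add: ennreal_mult' mult_ac)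
  also have "ennreal p * (\<integral>\<^sup>+\<omega>. ennreal (Phi (\<mu>-r) \<sigma> \<tau> 0 \<omega>) \<partial>M) = (\<integral>\<^sup>+\<omega>. ennreal p * ennreal (Phi (\<mu>-r) \<sigma> \<tau> 0 \<omega>) \<partial>M)"
    by (rule nn_integral_cmult[symmetric]) (use Phi_meas[OF st order_refl] in measurable)
  also have "\<dots> = (\<integral>\<^sup>+\<omega>. ennreal (Xs \<mu> \<sigma> r p \<tau> 0 \<omega>) \<partial>M)"
    using p Phi_nonneg by (intro nn_integral_cong) (simp add: Xs_Phi ennreal_mult')
  finally show ?thesis .
qed

end

locale optm = bmset M F B for M :: "'a measure" and F B +
  fixes \<mu> \<sigma> r p \<delta> :: real
  assumes r_pos: "0 < r" and mu_r: "\<mu> < r" and p_pos: "0 < p" and del_nn: "0 \<le> \<delta>"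
begin

interpretation P: pair_sigma_finite M lborel
  by (intro pair_sigma_finite.intro sigma_finite_measure_axioms lborel.sigma_finite_measure_axioms)

definition gm :: "'a \<Rightarrow> real \<Rightarrow> real" where
  "gm \<omega> t = p * exp ((\<mu> - \<sigma>\<^sup>2 / 2) * t + \<sigma> * Bm t \<omega>)"
definition X :: "'a \<Rightarrow> real \<Rightarrow> real" where
  "X \<omega> t = exp (- r * t) * gm \<omega> t"

lemma gbm_gm: "0 \<le> t \<Longrightarrow> gbm \<mu> \<sigma> p B t \<omega> = gm \<omega> t"
  by (simp add: gbm_def gm_def Bm_def)

lemma gm_joint[measurable]: "(\<lambda>(\<omega>, t). gm \<omega> t) \<in> borel_measurable (M \<Otimes>\<^sub>M lborel)"
proof -
  note Bm_joint[measurable]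
  show ?thesis unfolding gm_def[abs_def] by measurable
qed

lemma X_joint[measurable]: "(\<lambda>(\<omega>, t). X \<omega> t) \<in> borel_measurable (M \<Otimes>\<^sub>M lborel)"
proof -
  have "(\<lambda>(\<omega>, t). exp (- r * t) * gm \<omega> t) \<in> borel_measurable (M \<Otimes>\<^sub>M lborel)"
    using gm_joint by measurable
  then show ?thesis unfolding X_def[abs_def] .
qed

lemma X_pos: "0 < X \<omega> t" using p_pos by (simp add: X_def gm_def)
lemma X_nonneg: "0 \<le> X \<omega> t" using X_pos[of \<omega> t] by simp

lemma X_meas_t: "\<omega> \<in> space M \<Longrightarrow> X \<omega> \<in> borel_measurable lborel"
  using measurable_Pair2[OF X_joint] by simp

lemma X_comp: assumes "u \<in> borel_measurable M" shows "(\<lambda>\<omega>. X \<omega> (u \<omega>)) \<in> borel_measurable M"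
  using measurable_Pair_compose_split[OF X_joint measurable_ident_sets[OF refl] to_lborel[OF assms]] by simp

lemma Bm_cont: "\<omega> \<in> space M \<Longrightarrow> continuous_on UNIV (\<lambda>t. Bm t \<omega>)"
  unfolding Bm_def
  by (rule continuous_on_compose2[OF Bcont]) (auto intro!: continuous_intros)

lemma X_cont: "\<omega> \<in> space M \<Longrightarrow> continuous_on UNIV (X \<omega>)"
  unfolding X_def gm_def using Bm_cont by (auto intro!: continuous_intros)

lemma X_gm_EM: "0 \<le> t \<Longrightarrow> X \<omega> t = p * exp ((\<mu>-r)*t) * EM \<sigma> t \<omega>"
  using gbm_EM[of r t \<mu> \<sigma> p \<omega>] by (simp add: X_def gbm_gm)

lemma EX_t: assumes t: "0 \<le> t" shows "(\<integral>\<^sup>+\<omega>. ennreal (X \<omega> t) \<partial>M) = ennreal (p * exp ((\<mu>-r)*t))"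
proof -
  have "(\<integral>\<^sup>+\<omega>. ennreal (X \<omega> t) \<partial>M) = (\<integral>\<^sup>+\<omega>. ennreal (p * exp ((\<mu>-r)*t)) * ennreal (EM \<sigma> t \<omega>) \<partial>M)"
    using p_pos by (intro nn_integral_cong) (simp add: X_gm_EM[OF t] ennreal_mult')
  also have "\<dots> = ennreal (p * exp ((\<mu>-r)*t)) * (\<integral>\<^sup>+\<omega>. ennreal (EM \<sigma> t \<omega>) \<partial>M)"
    by (rule nn_integral_cmult) (use Ex_meas[OF t] in measurable)
  also have "\<dots> = ennreal (p * exp ((\<mu>-r)*t))" using EM_int1[OF t] by simp
  finally show ?thesis .
qed

lemma exp_int0: "(\<integral>\<^sup>+t\<in>{0..}. ennreal (exp ((\<mu>-r)*t)) \<partial>lborel) = ennreal (1 / (r - \<mu>))"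
proof -
  have "(\<integral>\<^sup>+t\<in>{0..}. ennreal (exp ((\<mu>-r)*t)) \<partial>lborel) = ennreal (0 - exp ((\<mu>-r)*0) / (\<mu>-r))"
  proof (rule nn_integral_FTC_atLeast)
    show "(\<lambda>t. exp ((\<mu>-r)*t)) \<in> borel_measurable borel" by measurable
    fix x :: real
    show "((\<lambda>t. exp ((\<mu>-r)*t) / (\<mu>-r)) has_real_derivative exp ((\<mu>-r)*x)) (at x)"
      using mu_r by (auto intro!: derivative_eq_intros)
    show "0 \<le> exp ((\<mu>-r)*x)" by simp
  next
    have "((\<lambda>t. exp ((\<mu>-r)*t)) \<longlongrightarrow> 0) at_top"
      using mu_r by real_asymp
    then show "((\<lambda>t. exp ((\<mu>-r)*t) / (\<mu>-r)) \<longlongrightarrow> 0) at_top"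
      using tendsto_divide_zero by blast
  qed
  also have "0 - exp ((\<mu>-r)*0) / (\<mu>-r) = 1 / (r - \<mu>)" using mu_r by (simp add: field_simps)
  finally show ?thesis .
qed

lemma G_eq: "(\<integral>\<^sup>+\<omega>. (\<integral>\<^sup>+t\<in>{0..}. ennreal (X \<omega> t) \<partial>lborel) \<partial>M) = ennreal (p / (r - \<mu>))"
proof -
  have "(\<integral>\<^sup>+\<omega>. (\<integral>\<^sup>+t. ennreal (X \<omega> t) * indicator {0..} t \<partial>lborel) \<partial>M)
      = (\<integral>\<^sup>+t. (\<integral>\<^sup>+\<omega>. ennreal (X \<omega> t) * indicator {0..} t \<partial>M) \<partial>lborel)"
    by (rule P.Fubini'[symmetric]) measurable
  also have "\<dots> = (\<integral>\<^sup>+t. ennreal p * (ennreal (exp ((\<mu>-r)*t)) * indicator {0..} t) \<partial>lborel)"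
  proof (rule nn_integral_cong)
    fix t :: real
    show "(\<integral>\<^sup>+\<omega>. ennreal (X \<omega> t) * indicator {0..} t \<partial>M) = ennreal p * (ennreal (exp ((\<mu>-r)*t)) * indicator {0..} t)"
    proof (cases "0 \<le> t")
      case True
      then show ?thesis using EX_t[OF True] p_pos by (simp add: ennreal_mult')
    qed simp
  qed
  also have "\<dots> = ennreal p * (\<integral>\<^sup>+t\<in>{0..}. ennreal (exp ((\<mu>-r)*t)) \<partial>lborel)"
    by (rule nn_integral_cmult) measurable
  also have "\<dots> = ennreal (p / (r - \<mu>))" using exp_int0 p_pos mu_r by (simp add: ennreal_mult'[symmetric])
  finally show ?thesis .
qed

lemma good_AE: "AE \<omega> in M. (\<integral>\<^sup>+t\<in>{0..}. ennreal (X \<omega> t) \<partial>lborel) \<noteq> \<infinity>"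
proof (rule nn_integral_PInf_AE)
  show "(\<lambda>\<omega>. \<integral>\<^sup>+t\<in>{0..}. ennreal (X \<omega> t) \<partial>lborel) \<in> borel_measurable M"
    by measurable
  show "(\<integral>\<^sup>+\<omega>. (\<integral>\<^sup>+t\<in>{0..}. ennreal (X \<omega> t) \<partial>lborel) \<partial>M) \<noteq> \<infinity>" unfolding G_eq by simp
qed

lemma Xs_X: assumes st: "stopping_time_inf M F \<tau>" and om: "\<omega> \<in> space M" and s: "0 \<le> s"
  shows "Xs \<mu> \<sigma> r p \<tau> s \<omega> = (if \<tau> \<omega> = \<infinity> then 0 else X \<omega> (real_of_ereal (\<tau> \<omega>) + s))"
  using T_nonneg[OF st om] s by (simp add: Xs_def X_def gbm_gm)

lemma k1_int: "(\<integral>\<^sup>+s. ennreal (exp ((\<mu> - r) * s)) * indicator {0..<\<delta>} s \<partial>lborel) = ennreal (k1 \<mu> r \<delta>)"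
proof -
  have "(\<integral>\<^sup>+s. ennreal (exp ((\<mu> - r) * s)) * indicator {0..<\<delta>} s \<partial>lborel) = (\<integral>\<^sup>+s\<in>{0..\<delta>}. ennreal (exp ((\<mu> - r) * s)) \<partial>lborel)"
    by (intro nn_integral_cong_AE, rule AE_mp[OF AE_lborel_singleton[of \<delta>]], rule AE_I2) (auto simp: indicator_def)
  also have "\<dots> = ennreal (exp ((\<mu> - r) * \<delta>) / (\<mu>-r) - exp ((\<mu> - r) * 0) / (\<mu>-r))"
  proof (rule nn_integral_FTC_Icc)
    show "(\<lambda>t. exp ((\<mu> - r) * t)) \<in> borel_measurable borel" by measurable
    fix x :: real
    show "((\<lambda>t. exp ((\<mu> - r) * t) / (\<mu>-r)) has_real_derivative exp ((\<mu> - r) * x)) (at x)"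
      using mu_r by (auto intro!: derivative_eq_intros)
    show "0 \<le> exp ((\<mu> - r) * x)" by simp
  qed (use del_nn in simp)
  also have "exp ((\<mu> - r) * \<delta>) / (\<mu>-r) - exp ((\<mu> - r) * 0) / (\<mu>-r) = k1 \<mu> r \<delta>"
    by (simp add: k1_def diff_divide_distrib)
  finally show ?thesis .
qed

lemma shift_int:
  assumes st: "stopping_time_inf M F \<tau>"
  shows "(\<integral>\<^sup>+\<omega>. (if \<tau> \<omega> = \<infinity> then 0 else \<integral>\<^sup>+t. ennreal (X \<omega> t) * indicator {real_of_ereal (\<tau> \<omega>)..<real_of_ereal (\<tau> \<omega>) + \<delta>} t \<partial>lborel) \<partial>M)
        = ennreal (k1 \<mu> r \<delta>) * (\<integral>\<^sup>+\<omega>. ennreal (Xs \<mu> \<sigma> r p \<tau> 0 \<omega>) \<partial>M)"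
proof -
  define T where "T \<omega> = real_of_ereal (\<tau> \<omega>)" for \<omega>
  have Tm[measurable]: "T \<in> borel_measurable M" unfolding T_def[abs_def] using stop_meas[OF st] by measurable
  have tm[measurable]: "\<tau> \<in> borel_measurable M" using stop_meas[OF st] .
  have XTm[measurable]: "(\<lambda>x. X (fst x) (T (fst x) + snd x)) \<in> borel_measurable (M \<Otimes>\<^sub>M lborel)"
    by (rule measurable_Pair_compose_split[OF X_joint measurable_fst]) (rule to_lborel, measurable)
  define I0 where "I0 = (\<integral>\<^sup>+\<omega>. ennreal (Xs \<mu> \<sigma> r p \<tau> 0 \<omega>) \<partial>M)"
  have "(\<integral>\<^sup>+\<omega>. (if \<tau> \<omega> = \<infinity> then 0 else \<integral>\<^sup>+t. ennreal (X \<omega> t) * indicator {T \<omega>..<T \<omega> + \<delta>} t \<partial>lborel) \<partial>M)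
      = (\<integral>\<^sup>+\<omega>. \<integral>\<^sup>+s. ennreal (if \<tau> \<omega> = \<infinity> then 0 else X \<omega> (T \<omega> + s)) * indicator {0..<\<delta>} s \<partial>lborel \<partial>M)"
  proof (rule nn_integral_cong)
    fix \<omega> assume om: "\<omega> \<in> space M"
    show "(if \<tau> \<omega> = \<infinity> then 0 else \<integral>\<^sup>+t. ennreal (X \<omega> t) * indicator {T \<omega>..<T \<omega> + \<delta>} t \<partial>lborel)
        = (\<integral>\<^sup>+s. ennreal (if \<tau> \<omega> = \<infinity> then 0 else X \<omega> (T \<omega> + s)) * indicator {0..<\<delta>} s \<partial>lborel)"
    proof (cases "\<tau> \<omega> = \<infinity>")
      case False
      have fm: "(\<lambda>t. ennreal (X \<omega> t) * indicator {T \<omega>..<T \<omega> + \<delta>} t) \<in> borel_measurable borel"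
        using X_meas_t[OF om] by measurable
      have "(\<integral>\<^sup>+t. ennreal (X \<omega> t) * indicator {T \<omega>..<T \<omega> + \<delta>} t \<partial>lborel)
          = ennreal \<bar>1\<bar> * (\<integral>\<^sup>+s. ennreal (X \<omega> (T \<omega> + 1 * s)) * indicator {T \<omega>..<T \<omega> + \<delta>} (T \<omega> + 1 * s) \<partial>lborel)"
        by (rule nn_integral_real_affine[OF fm]) simp
      also have "\<dots> = (\<integral>\<^sup>+s. ennreal (X \<omega> (T \<omega> + s)) * indicator {0..<\<delta>} s \<partial>lborel)"
      proof -
        have pw: "indicator {T \<omega>..<T \<omega> + \<delta>} (T \<omega> + s) = (indicator {0..<\<delta>} s :: ennreal)" for s
          by (simp add: indicator_def)
        show ?thesis by (simp add: pw)
      qed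
      finally show ?thesis using False by simp
    qed simp
  qed
  also have "\<dots> = (\<integral>\<^sup>+s. \<integral>\<^sup>+\<omega>. ennreal (if \<tau> \<omega> = \<infinity> then 0 else X \<omega> (T \<omega> + s)) * indicator {0..<\<delta>} s \<partial>M \<partial>lborel)"
    by (rule P.Fubini'[symmetric]) measurable
  also have "\<dots> = (\<integral>\<^sup>+s. (ennreal (exp ((\<mu> - r) * s)) * indicator {0..<\<delta>} s) * I0 \<partial>lborel)"
  proof (rule nn_integral_cong)
    fix s :: real
    show "(\<integral>\<^sup>+\<omega>. ennreal (if \<tau> \<omega> = \<infinity> then 0 else X \<omega> (T \<omega> + s)) * indicator {0..<\<delta>} s \<partial>M)
        = (ennreal (exp ((\<mu> - r) * s)) * indicator {0..<\<delta>} s) * I0"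
    proof (cases "s \<in> {0..<\<delta>}")
      case True
      then have s0: "0 \<le> s" by simp
      have "(\<integral>\<^sup>+\<omega>. ennreal (if \<tau> \<omega> = \<infinity> then 0 else X \<omega> (T \<omega> + s)) * indicator {0..<\<delta>} s \<partial>M)
          = (\<integral>\<^sup>+\<omega>. ennreal (Xs \<mu> \<sigma> r p \<tau> s \<omega>) \<partial>M)"
        using True by (intro nn_integral_cong) (simp add: Xs_X[OF st _ s0] T_def)
      also have "\<dots> = ennreal (exp ((\<mu> - r) * s)) * I0"
        unfolding I0_def by (rule Xs_shift[OF st s0]) (use mu_r p_pos in auto)
      finally show ?thesis using True by simp
    qed simp
  qed
  also have "\<dots> = (\<integral>\<^sup>+s. ennreal (exp ((\<mu> - r) * s)) * indicator {0..<\<delta>} s \<partial>lborel) * I0"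
    by (rule nn_integral_multc) measurable
  also have "\<dots> = ennreal (k1 \<mu> r \<delta>) * I0" by (simp add: k1_int)
  finally show ?thesis unfolding T_def I0_def .
qed

definition Sab :: "ereal \<Rightarrow> ereal \<Rightarrow> real set" where "Sab a b = {t. a \<le> ereal t \<and> ereal t < b}"

lemma Sab_sets[measurable]: "Sab a b \<in> sets lborel"
proof -
  have "Measurable.pred lborel (\<lambda>t. a \<le> ereal t \<and> ereal t < b)" by measurable
  then show ?thesis by (simp add: pred_def Sab_def)
qed

lemma run_int_Sab: "run_int r C P a b = (LINT t:Sab a b|lborel. exp (-r*t) * (P t - C))"
  by (simp add: run_int_def Sab_def)

lemma Sab_fin: "Sab (ereal x) (ereal x + ereal d) = {x..<x+d}"
  by (auto simp: Sab_def)
lemma Sab_fin': "Sab (ereal x) (ereal (x + d)) = {x..<x+d}"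
  by (auto simp: Sab_def)

lemma Sab_inf: "Sab \<infinity> b = {}" by (auto simp: Sab_def)

lemma Sab_sub: "0 \<le> a \<Longrightarrow> Sab a b \<subseteq> {0..}"
  by (auto simp: Sab_def) (metis ereal_less_eq(5) order_trans)

lemma ind_shift:
  assumes a0: "0 \<le> a" and ab: "a \<le> b"
  shows "indicator (Sab (a + ereal \<delta>) (b + ereal \<delta>)) t = (indicator (Sab a b) t - indicator (Sab a (a + ereal \<delta>)) t + indicator (Sab b (b + ereal \<delta>)) t :: real)"
proof (cases a)
  case (real x)
  show ?thesis
  proof (cases b)
    case (real y)
    then show ?thesis using \<open>a = ereal x\<close> ab del_nn by (auto simp: Sab_def indicator_def)
  next
    case PInf
    then show ?thesis using \<open>a = ereal x\<close> del_nn by (auto simp: Sab_def indicator_def)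
  next
    case MInf
    then show ?thesis using ab a0 by simp
  qed
next
  case PInf
  then have "b = \<infinity>" using ab by simp
  then show ?thesis using PInf by (simp add: Sab_def indicator_def)
next
  case MInf
  then show ?thesis using a0 by simp
qed

lemma exp_int_r: "(\<integral>\<^sup>+t\<in>{0..}. ennreal (exp (- r * t)) \<partial>lborel) = ennreal (1 / r)"
proof -
  have "(\<integral>\<^sup>+t\<in>{0..}. ennreal (exp (- r * t)) \<partial>lborel) = ennreal (0 - (- exp (- r * 0) / r))"
  proof (rule nn_integral_FTC_atLeast)
    show "(\<lambda>t. exp (- r * t)) \<in> borel_measurable borel" by measurable
    fix x :: real
    show "((\<lambda>t. - exp (- r * t) / r) has_real_derivative exp (- r * x)) (at x)"
      using r_pos by (auto intro!: derivative_eq_intros)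
    show "0 \<le> exp (- r * x)" by simp
  next
    have "((\<lambda>t. exp (- r * t)) \<longlongrightarrow> 0) at_top"
      using r_pos by real_asymp
    then have "((\<lambda>t. - exp (- r * t)) \<longlongrightarrow> - 0) at_top" by (rule tendsto_minus)
    then show "((\<lambda>t. - exp (- r * t) / r) \<longlongrightarrow> 0) at_top"
      using tendsto_divide_zero by fastforce
  qed
  then show ?thesis by simp
qed

lemma si_X0: assumes om: "\<omega> \<in> space M" and good: "(\<integral>\<^sup>+t\<in>{0..}. ennreal (X \<omega> t) \<partial>lborel) \<noteq> \<infinity>"
  shows "set_integrable lborel {0..} (X \<omega>)"
  unfolding set_integrable_def
proof (rule integrableI_bounded)
  show "(\<lambda>t. indicator {0..} t *\<^sub>R X \<omega> t) \<in> borel_measurable lborel"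
    using X_meas_t[OF om] by measurable
  have "(\<integral>\<^sup>+t. ennreal (norm (indicator {0..} t *\<^sub>R X \<omega> t)) \<partial>lborel) = (\<integral>\<^sup>+t\<in>{0..}. ennreal (X \<omega> t) \<partial>lborel)"
    by (intro nn_integral_cong) (simp add: indicator_def X_nonneg)
  then show "(\<integral>\<^sup>+t. ennreal (norm (indicator {0..} t *\<^sub>R X \<omega> t)) \<partial>lborel) < \<infinity>"
    using good by (simp add: less_top)
qed

lemma si_E0: "set_integrable lborel {0..} (\<lambda>t. exp (- r * t))"
  unfolding set_integrable_def
proof (rule integrableI_bounded)
  show "(\<lambda>t. indicator {0..} t *\<^sub>R exp (- r * t)) \<in> borel_measurable lborel" by measurable
  have "(\<integral>\<^sup>+t. ennreal (norm (indicator {0..} t *\<^sub>R exp (- r * t))) \<partial>lborel) = (\<integral>\<^sup>+t\<in>{0..}. ennreal (exp (- r * t)) \<partial>lborel)"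
    by (intro nn_integral_cong) (simp add: indicator_def)
  then show "(\<integral>\<^sup>+t. ennreal (norm (indicator {0..} t *\<^sub>R exp (- r * t))) \<partial>lborel) < \<infinity>"
    using exp_int_r by simp
qed

lemma hh_eq: "exp (-r*t) * (gm \<omega> t - C) = X \<omega> t - C * exp (-r*t)"
  by (simp add: X_def algebra_simps)

lemma si_good:
  assumes om: "\<omega> \<in> space M" and good: "(\<integral>\<^sup>+t\<in>{0..}. ennreal (X \<omega> t) \<partial>lborel) \<noteq> \<infinity>"
    and S: "S \<in> sets lborel" "S \<subseteq> {0..}"
  shows "set_integrable lborel S (\<lambda>t. exp (-r*t) * (gm \<omega> t - C))"
proof -
  have "set_integrable lborel {0..} (\<lambda>t. X \<omega> t - C * exp (-r*t))"
    using si_X0[OF om good] si_E0 by (intro set_integral_diff(1) set_integrable_mult_right) auto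
  then have "set_integrable lborel {0..} (\<lambda>t. exp (-r*t) * (gm \<omega> t - C))"
    unfolding hh_eq .
  then show ?thesis by (rule set_integrable_subset) (use S in auto)
qed

lemma RI_decomp:
  assumes om: "\<omega> \<in> space M" and good: "(\<integral>\<^sup>+t\<in>{0..}. ennreal (X \<omega> t) \<partial>lborel) \<noteq> \<infinity>"
    and a0: "0 \<le> a" and ab: "a \<le> b"
  shows "run_int r C (gm \<omega>) (a + ereal \<delta>) (b + ereal \<delta>)
       = run_int r C (gm \<omega>) a b - run_int r C (gm \<omega>) a (a + ereal \<delta>) + run_int r C (gm \<omega>) b (b + ereal \<delta>)"
proof -
  define hh where "hh t = exp (-r*t) * (gm \<omega> t - C)" for t
  have b0: "0 \<le> b" using a0 ab by (rule order_trans)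
  have ad0: "0 \<le> a + ereal \<delta>" using a0 del_nn by (simp add: add_nonneg_nonneg)
  have bd0: "0 \<le> b + ereal \<delta>" using b0 del_nn by (simp add: add_nonneg_nonneg)
  have i2: "integrable lborel (\<lambda>t. indicator (Sab a b) t *\<^sub>R hh t)"
    using si_good[OF om good Sab_sets Sab_sub[OF a0]] unfolding set_integrable_def hh_def .
  have i3: "integrable lborel (\<lambda>t. indicator (Sab a (a + ereal \<delta>)) t *\<^sub>R hh t)"
    using si_good[OF om good Sab_sets Sab_sub[OF a0]] unfolding set_integrable_def hh_def .
  have i4: "integrable lborel (\<lambda>t. indicator (Sab b (b + ereal \<delta>)) t *\<^sub>R hh t)"
    using si_good[OF om good Sab_sets Sab_sub[OF b0]] unfolding set_integrable_def hh_def .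
  have "run_int r C (gm \<omega>) (a + ereal \<delta>) (b + ereal \<delta>) = (\<integral>t. indicator (Sab (a + ereal \<delta>) (b + ereal \<delta>)) t *\<^sub>R hh t \<partial>lborel)"
    by (simp add: run_int_Sab set_lebesgue_integral_def hh_def)
  also have "\<dots> = (\<integral>t. (indicator (Sab a b) t *\<^sub>R hh t - indicator (Sab a (a + ereal \<delta>)) t *\<^sub>R hh t) + indicator (Sab b (b + ereal \<delta>)) t *\<^sub>R hh t \<partial>lborel)"
    by (intro Bochner_Integration.integral_cong refl) (simp add: ind_shift[OF a0 ab] algebra_simps)
  also have "\<dots> = ((\<integral>t. indicator (Sab a b) t *\<^sub>R hh t \<partial>lborel) - (\<integral>t. indicator (Sab a (a + ereal \<delta>)) t *\<^sub>R hh t \<partial>lborel)) + (\<integral>t. indicator (Sab b (b + ereal \<delta>)) t *\<^sub>R hh t \<partial>lborel)"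
    using i2 i3 i4 by (simp add: Bochner_Integration.integral_add Bochner_Integration.integral_diff)
  also have "\<dots> = run_int r C (gm \<omega>) a b - run_int r C (gm \<omega>) a (a + ereal \<delta>) + run_int r C (gm \<omega>) b (b + ereal \<delta>)"
    by (simp add: run_int_Sab set_lebesgue_integral_def hh_def)
  finally show ?thesis .
qed

lemma E_small: "(LINT t:{x..<x+\<delta>}|lborel. exp (-r*t)) = exp (-r*x) * (1 - exp (-r*\<delta>)) / r"
proof -
  have "(LINT t:{x..<x+\<delta>}|lborel. exp (-r*t)) = (LINT t:{x..x+\<delta>}|lborel. exp (-r*t))"
    unfolding set_lebesgue_integral_def
    by (intro integral_cong_AE, measurable, rule AE_mp[OF AE_lborel_singleton[of "x+\<delta>"]], rule AE_I2) (auto simp: indicator_def)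
  also have "\<dots> = (- exp (-r*(x+\<delta>)) / r) - (- exp (-r*x) / r)"
    unfolding set_lebesgue_integral_def
  proof (rule integral_FTC_atLeastAtMost)
    show "x \<le> x + \<delta>" using del_nn by simp
    fix y :: real
    show "((\<lambda>t. - exp (-r*t) / r) has_vector_derivative exp (-r*y)) (at y within {x..x+\<delta>})"
      unfolding has_real_derivative_iff_has_vector_derivative[symmetric]
      using r_pos by (auto intro!: derivative_eq_intros)
  next
    show "continuous_on {x..x+\<delta>} (\<lambda>t. exp (-r*t))" by (intro continuous_intros)
  qed
  also have "\<dots> = exp (-r*x) * (1 - exp (-r*\<delta>)) / r"
  proof -
    have "-r*(x+\<delta>) = -r*x + -r*\<delta>" by (simp add: algebra_simps)
    then have e: "exp (-r*(x+\<delta>)) = exp (-r*x) * exp (-r*\<delta>)" by (simp only: exp_add)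
    show ?thesis unfolding e using r_pos by (simp add: field_simps)
  qed
  finally show ?thesis .
qed

lemma RI_small:
  assumes om: "\<omega> \<in> space M"
  shows "run_int r C (gm \<omega>) (ereal x) (ereal x + ereal \<delta>) = run_int r 0 (gm \<omega>) (ereal x) (ereal x + ereal \<delta>) - C * (exp (-r*x) * (1 - exp (-r*\<delta>)) / r)"
proof -
  have sX: "set_integrable lborel {x..<x+\<delta>} (X \<omega>)"
  proof (rule set_integrable_subset)
    show "set_integrable lborel {x..x+\<delta>} (X \<omega>)"
      by (rule borel_integrable_atLeastAtMost') (rule continuous_on_subset[OF X_cont[OF om]], simp)
  qed auto
  have sE: "set_integrable lborel {x..<x+\<delta>} (\<lambda>t. exp (-r*t))"
  proof (rule set_integrable_subset)
    show "set_integrable lborel {x..x+\<delta>} (\<lambda>t. exp (-r*t))"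
      by (rule borel_integrable_atLeastAtMost') (intro continuous_intros)
  qed auto
  have sE': "set_integrable lborel {x..<x+\<delta>} (\<lambda>t. C * exp (-r*t))"
    using sE by (rule set_integrable_mult_right)
  have "run_int r C (gm \<omega>) (ereal x) (ereal x + ereal \<delta>) = (LINT t:{x..<x+\<delta>}|lborel. exp (-r*t) * (gm \<omega> t - C))"
    unfolding run_int_Sab Sab_fin ..
  also have "\<dots> = (LINT t:{x..<x+\<delta>}|lborel. X \<omega> t - C * exp (-r*t))"
    unfolding hh_eq ..
  also have "\<dots> = (LINT t:{x..<x+\<delta>}|lborel. X \<omega> t) - (LINT t:{x..<x+\<delta>}|lborel. C * exp (-r*t))"
    by (rule set_integral_diff(2)[OF sX sE'])
  also have "(LINT t:{x..<x+\<delta>}|lborel. C * exp (-r*t)) = C * (LINT t:{x..<x+\<delta>}|lborel. exp (-r*t))"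
    by (rule set_integral_mult_right)
  also have "(LINT t:{x..<x+\<delta>}|lborel. X \<omega> t) = run_int r 0 (gm \<omega>) (ereal x) (ereal x + ereal \<delta>)"
    unfolding run_int_Sab Sab_fin X_def by simp
  finally show ?thesis unfolding E_small .
qed

lemma disc_fin: "disc_at r f (ereal x) = exp (-r*x) * f x" by (simp add: disc_at_def)
lemma disc_inf: "disc_at r f \<infinity> = 0" by (simp add: disc_at_def)

lemma part1:
  assumes om: "\<omega> \<in> space M" and e0: "0 \<le> e"
  defines "Zf \<equiv> \<lambda>e. if e = \<infinity> then 0 else X \<omega> (real_of_ereal e)"
  shows "- run_int r C (gm \<omega>) e (e + ereal \<delta>) - disc_at r (\<lambda>_. K) (e + ereal \<delta>) + disc_at r (\<lambda>t. k * gm \<omega> t + (C / r * (exp (-r*\<delta>) - 1) + exp (-r*\<delta>) * K)) e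
        = - (run_int r 0 (gm \<omega>) e (e + ereal \<delta>) - k * Zf e)"
proof (cases e)
  case (real x)
  have rs: "run_int r C (gm \<omega>) e (e + ereal \<delta>) = run_int r 0 (gm \<omega>) e (e + ereal \<delta>) - C * (exp (-r*x) * (1 - exp (-r*\<delta>)) / r)"
    unfolding real by (rule RI_small[OF om])
  have "-r*(x+\<delta>) = -r*x + -r*\<delta>" by (simp add: algebra_simps)
  then have es: "exp (-r*(x+\<delta>)) = exp (-r*x) * exp (-r*\<delta>)" by (simp only: exp_add)
  have d1: "disc_at r (\<lambda>_. K) (e + ereal \<delta>) = exp (-r*(x+\<delta>)) * K" unfolding real by (simp add: disc_at_def)
  have d2: "disc_at r (\<lambda>t. k * gm \<omega> t + (C / r * (exp (-r*\<delta>) - 1) + exp (-r*\<delta>) * K)) e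
      = exp (-r*x) * (k * gm \<omega> x + (C / r * (exp (-r*\<delta>) - 1) + exp (-r*\<delta>) * K))" unfolding real by (rule disc_fin)
  have z: "Zf e = exp (-r*x) * gm \<omega> x" unfolding real by (simp add: Zf_def X_def)
  show ?thesis unfolding rs d1 d2 z es using r_pos by (simp add: field_simps)
next
  case PInf
  then show ?thesis by (simp add: run_int_Sab Sab_inf disc_inf Zf_def set_lebesgue_integral_def)
next
  case MInf then show ?thesis using e0 by simp
qed

lemma l1_k1: "l1 m rr d = - k1 m rr d" by (simp add: l1_def k1_def minus_divide_left)

lemma part2:
  assumes om: "\<omega> \<in> space M" and e0: "0 \<le> e"
  defines "Zf \<equiv> \<lambda>e. if e = \<infinity> then 0 else X \<omega> (real_of_ereal e)"
  shows "run_int r C (gm \<omega>) e (e + ereal \<delta>) - disc_at r (\<lambda>_. K) (e + ereal \<delta>) + disc_at r (\<lambda>t. l1 \<mu> r \<delta> * gm \<omega> t + l0 r C K \<delta>) e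
        = run_int r 0 (gm \<omega>) e (e + ereal \<delta>) - k1 \<mu> r \<delta> * Zf e"
proof (cases e)
  case (real x)
  have rs: "run_int r C (gm \<omega>) e (e + ereal \<delta>) = run_int r 0 (gm \<omega>) e (e + ereal \<delta>) - C * (exp (-r*x) * (1 - exp (-r*\<delta>)) / r)"
    unfolding real by (rule RI_small[OF om])
  have "-r*(x+\<delta>) = -r*x + -r*\<delta>" by (simp add: algebra_simps)
  then have es: "exp (-r*(x+\<delta>)) = exp (-r*x) * exp (-r*\<delta>)" by (simp only: exp_add)
  have d1: "disc_at r (\<lambda>_. K) (e + ereal \<delta>) = exp (-r*(x+\<delta>)) * K" unfolding real by (simp add: disc_at_def)
  have d2: "disc_at r (\<lambda>t. l1 \<mu> r \<delta> * gm \<omega> t + l0 r C K \<delta>) e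
      = exp (-r*x) * (l1 \<mu> r \<delta> * gm \<omega> x + l0 r C K \<delta>)" unfolding real by (rule disc_fin)
  have z: "Zf e = exp (-r*x) * gm \<omega> x" unfolding real by (simp add: Zf_def X_def)
  show ?thesis unfolding rs d1 d2 z es unfolding l1_k1 l0_def using r_pos by (simp add: field_simps)
next
  case PInf
  then show ?thesis by (simp add: run_int_Sab Sab_inf disc_inf Zf_def set_lebesgue_integral_def)
next
  case MInf then show ?thesis using e0 by simp
qed

lemma path_id:
  assumes om: "\<omega> \<in> space M" and good: "(\<integral>\<^sup>+t\<in>{0..}. ennreal (X \<omega> t) \<partial>lborel) \<noteq> \<infinity>"
    and a0: "0 \<le> a" and ab: "a \<le> b"
  defines "Zf \<equiv> \<lambda>e. if e = \<infinity> then 0 else X \<omega> (real_of_ereal e)"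
  shows "run_int r C (gm \<omega>) (a + ereal \<delta>) (b + ereal \<delta>) - disc_at r (\<lambda>_. KI) (a + ereal \<delta>) - disc_at r (\<lambda>_. KO) (b + ereal \<delta>)
       = (run_int r C (gm \<omega>) a b - disc_at r (\<lambda>t. k1 \<mu> r \<delta> * gm \<omega> t + k0 r C KI \<delta>) a - disc_at r (\<lambda>t. l1 \<mu> r \<delta> * gm \<omega> t + l0 r C KO \<delta>) b)
         - (run_int r 0 (gm \<omega>) a (a + ereal \<delta>) - k1 \<mu> r \<delta> * Zf a) + (run_int r 0 (gm \<omega>) b (b + ereal \<delta>) - k1 \<mu> r \<delta> * Zf b)"
proof -
  have b0: "0 \<le> b" using a0 ab by (rule order_trans)
  note dec = RI_decomp[OF om good a0 ab, of C]
  have pa: "- run_int r C (gm \<omega>) a (a + ereal \<delta>) - disc_at r (\<lambda>_. KI) (a + ereal \<delta>) + disc_at r (\<lambda>t. k1 \<mu> r \<delta> * gm \<omega> t + k0 r C KI \<delta>) a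
        = - (run_int r 0 (gm \<omega>) a (a + ereal \<delta>) - k1 \<mu> r \<delta> * Zf a)"
    unfolding k0_def Zf_def by (rule part1[OF om a0])
  have pb: "run_int r C (gm \<omega>) b (b + ereal \<delta>) - disc_at r (\<lambda>_. KO) (b + ereal \<delta>) + disc_at r (\<lambda>t. l1 \<mu> r \<delta> * gm \<omega> t + l0 r C KO \<delta>) b
        = run_int r 0 (gm \<omega>) b (b + ereal \<delta>) - k1 \<mu> r \<delta> * Zf b"
    unfolding Zf_def by (rule part2[OF om b0])
  show ?thesis using dec pa pb by linarith
qed

lemma ind_Sab: "indicator (Sab x y) t = (if x \<le> ereal t \<and> ereal t < y then 1 else (0::real))"
  by (simp add: Sab_def indicator_def)

lemma RIg_meas:
  assumes a[measurable]: "a \<in> borel_measurable M" and b[measurable]: "b \<in> borel_measurable M"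
  shows "(\<lambda>\<omega>. run_int r C (gm \<omega>) (a \<omega>) (b \<omega>)) \<in> borel_measurable M"
proof -
  have j: "(\<lambda>(\<omega>, t). (if a \<omega> \<le> ereal t \<and> ereal t < b \<omega> then 1 else (0::real)) * (exp (-r*t) * (gm \<omega> t - C))) \<in> borel_measurable (M \<Otimes>\<^sub>M lborel)"
    by measurable
  have "(\<lambda>\<omega>. \<integral>t. (if a \<omega> \<le> ereal t \<and> ereal t < b \<omega> then 1 else (0::real)) * (exp (-r*t) * (gm \<omega> t - C)) \<partial>lborel) \<in> borel_measurable M"
    using lborel.borel_measurable_lebesgue_integral[OF j] by simp
  then show ?thesis by (simp add: run_int_Sab set_lebesgue_integral_def ind_Sab)
qed

lemma RI_gm: assumes "0 \<le> a"
  shows "run_int r C (\<lambda>t. gbm \<mu> \<sigma> p B t \<omega>) a b = run_int r C (gm \<omega>) a b"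
  unfolding run_int_Sab
proof (rule set_lebesgue_integral_cong[OF Sab_sets], intro allI impI)
  fix t assume "t \<in> Sab a b"
  then have "0 \<le> t" using Sab_sub[OF assms, of b] by auto
  then show "exp (-r*t) * (gbm \<mu> \<sigma> p B t \<omega> - C) = exp (-r*t) * (gm \<omega> t - C)" by (simp add: gbm_gm)
qed

lemma disc_gm: assumes "0 \<le> e"
  shows "disc_at r (\<lambda>t. k * gbm \<mu> \<sigma> p B t \<omega> + c) e = disc_at r (\<lambda>t. k * gm \<omega> t + c) e"
proof (cases e)
  case (real x) then show ?thesis using assms by (simp add: disc_at_def gbm_gm)
qed (use assms in \<open>simp_all add: disc_at_def\<close>)

lemma RI_meas:
  assumes a: "a \<in> borel_measurable M" and b: "b \<in> borel_measurable M" and a0: "\<And>\<omega>. \<omega> \<in> space M \<Longrightarrow> 0 \<le> a \<omega>"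
  shows "(\<lambda>\<omega>. run_int r C (\<lambda>t. gbm \<mu> \<sigma> p B t \<omega>) (a \<omega>) (b \<omega>)) \<in> borel_measurable M"
  using RIg_meas[OF a b] by (rule measurable_cong[THEN iffD1, rotated]) (simp add: RI_gm a0)

lemma gm_comp: assumes "u \<in> borel_measurable M" shows "(\<lambda>\<omega>. gm \<omega> (u \<omega>)) \<in> borel_measurable M"
  using measurable_Pair_compose_split[OF gm_joint measurable_ident_sets[OF refl] to_lborel[OF assms]] by simp

lemma disc_meas:
  assumes st: "stopping_time_inf M F \<tau>"
  shows "(\<lambda>\<omega>. disc_at r (\<lambda>t. k * gbm \<mu> \<sigma> p B t \<omega> + c) (\<tau> \<omega>)) \<in> borel_measurable M"
proof -
  have tm[measurable]: "\<tau> \<in> borel_measurable M" by (rule stop_meas[OF st])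
  have gc[measurable]: "(\<lambda>\<omega>. gm \<omega> (real_of_ereal (\<tau> \<omega>))) \<in> borel_measurable M" by (rule gm_comp) measurable
  have "(\<lambda>\<omega>. if \<tau> \<omega> = \<infinity> then 0 else exp (-r * real_of_ereal (\<tau> \<omega>)) * (k * gm \<omega> (real_of_ereal (\<tau> \<omega>)) + c)) \<in> borel_measurable M"
    by measurable
  then show ?thesis
  proof (rule measurable_cong[THEN iffD1, rotated])
    fix \<omega> assume om: "\<omega> \<in> space M"
    have t0: "0 \<le> \<tau> \<omega>" by (rule stop_nonneg[OF st om])
    show "(if \<tau> \<omega> = \<infinity> then 0 else exp (-r * real_of_ereal (\<tau> \<omega>)) * (k * gm \<omega> (real_of_ereal (\<tau> \<omega>)) + c))
        = disc_at r (\<lambda>t. k * gbm \<mu> \<sigma> p B t \<omega> + c) (\<tau> \<omega>)"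
      unfolding disc_gm[OF t0] using t0 by (cases "\<tau> \<omega>") (simp_all add: disc_at_def)
  qed
qed

lemma discK_meas:
  assumes st: "stopping_time_inf M F \<tau>"
  shows "(\<lambda>\<omega>. disc_at r (\<lambda>_. K) (\<tau> \<omega> + ereal \<delta>)) \<in> borel_measurable M"
proof -
  have tm[measurable]: "\<tau> \<in> borel_measurable M" by (rule stop_meas[OF st])
  have "(\<lambda>\<omega>. if \<tau> \<omega> = \<infinity> then 0 else exp (-r * (real_of_ereal (\<tau> \<omega>) + \<delta>)) * K) \<in> borel_measurable M"
    by measurable
  then show ?thesis
  proof (rule measurable_cong[THEN iffD1, rotated])
    fix \<omega> assume om: "\<omega> \<in> space M"
    have t0: "0 \<le> \<tau> \<omega>" by (rule stop_nonneg[OF st om])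
    show "(if \<tau> \<omega> = \<infinity> then 0 else exp (-r * (real_of_ereal (\<tau> \<omega>) + \<delta>)) * K) = disc_at r (\<lambda>_. K) (\<tau> \<omega> + ereal \<delta>)"
      using t0 by (cases "\<tau> \<omega>") (simp_all add: disc_at_def)
  qed
qed

lemma k1_pos: assumes "0 < \<delta>" shows "0 < k1 \<mu> r \<delta>"
proof -
  have "(\<mu> - r) * \<delta> < 0" using mu_r assms by (simp add: mult_neg_pos)
  then have "exp ((\<mu> - r) * \<delta>) - 1 < 0" by simp
  moreover have "\<mu> - r < 0" using mu_r by simp
  ultimately show ?thesis unfolding k1_def by (rule divide_neg_neg)
qed

definition Yv :: "('a \<Rightarrow> ereal) \<Rightarrow> 'a \<Rightarrow> real" where "Yv \<tau> \<omega> = run_int r 0 (gm \<omega>) (\<tau> \<omega>) (\<tau> \<omega> + ereal \<delta>)"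
definition Zv :: "('a \<Rightarrow> ereal) \<Rightarrow> 'a \<Rightarrow> real" where "Zv \<tau> \<omega> = Xs \<mu> \<sigma> r p \<tau> 0 \<omega>"

lemma sX_fin: assumes om: "\<omega> \<in> space M" shows "set_integrable lborel {x..<x+\<delta>} (X \<omega>)"
proof (rule set_integrable_subset)
  show "set_integrable lborel {x..x+\<delta>} (X \<omega>)"
    by (rule borel_integrable_atLeastAtMost') (rule continuous_on_subset[OF X_cont[OF om]], simp)
qed auto

lemma Yv_nonneg: "0 \<le> Yv \<tau> \<omega>"
  unfolding Yv_def run_int_Sab set_lebesgue_integral_def
  by (rule Bochner_Integration.integral_nonneg) (use X_nonneg in \<open>simp add: X_def indicator_def\<close>)

lemma Yv_enn:
  assumes st: "stopping_time_inf M F \<tau>" and om: "\<omega> \<in> space M"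
  shows "ennreal (Yv \<tau> \<omega>) = (if \<tau> \<omega> = \<infinity> then 0 else \<integral>\<^sup>+t. ennreal (X \<omega> t) * indicator {real_of_ereal (\<tau> \<omega>)..<real_of_ereal (\<tau> \<omega>) + \<delta>} t \<partial>lborel)"
proof (cases "\<tau> \<omega> = \<infinity>")
  case True
  then show ?thesis by (simp add: Yv_def run_int_Sab Sab_inf set_lebesgue_integral_def)
next
  case False
  with stop_nonneg[OF st om] obtain x where x: "\<tau> \<omega> = ereal x" by (cases "\<tau> \<omega>") auto
  have "Yv \<tau> \<omega> = (LINT t:{x..<x+\<delta>}|lborel. X \<omega> t)"
    unfolding Yv_def x run_int_Sab Sab_fin X_def by simp
  also have "\<dots> = (\<integral>t. indicator {x..<x+\<delta>} t *\<^sub>R X \<omega> t \<partial>lborel)" by (simp add: set_lebesgue_integral_def)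
  finally have "ennreal (Yv \<tau> \<omega>) = ennreal (\<integral>t. indicator {x..<x+\<delta>} t *\<^sub>R X \<omega> t \<partial>lborel)" by simp
  also have "\<dots> = (\<integral>\<^sup>+t. ennreal (indicator {x..<x+\<delta>} t *\<^sub>R X \<omega> t) \<partial>lborel)"
    by (rule nn_integral_eq_integral[symmetric]) (use sX_fin[OF om, of x] in \<open>auto simp: set_integrable_def X_nonneg\<close>)
  also have "\<dots> = (\<integral>\<^sup>+t. ennreal (X \<omega> t) * indicator {x..<x+\<delta>} t \<partial>lborel)"
    by (intro nn_integral_cong) (simp add: indicator_def)
  finally show ?thesis using x by simp
qed

lemma YZ_props:
  assumes st: "stopping_time_inf M F \<tau>" and dp: "0 < \<delta>"
  shows "integrable M (Yv \<tau>)" "integrable M (Zv \<tau>)" "integral\<^sup>L M (Yv \<tau>) = k1 \<mu> r \<delta> * integral\<^sup>L M (Zv \<tau>)"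
proof -
  have tm[measurable]: "\<tau> \<in> borel_measurable M" by (rule stop_meas[OF st])
  have Ym: "Yv \<tau> \<in> borel_measurable M"
    unfolding Yv_def[abs_def] by (rule RIg_meas) measurable
  have Zeq: "Zv \<tau> \<omega> = p * exp ((\<mu> - r) * 0) * Phi (\<mu> - r) \<sigma> \<tau> 0 \<omega>" for \<omega>
    unfolding Zv_def by (rule Xs_Phi)
  have Zm: "Zv \<tau> \<in> borel_measurable M"
    unfolding Zeq using Phi_meas[OF st order_refl] by measurable
  have Zn: "0 \<le> Zv \<tau> \<omega>" for \<omega> unfolding Zeq using p_pos Phi_nonneg by simp
  have intY: "(\<integral>\<^sup>+\<omega>. ennreal (Yv \<tau> \<omega>) \<partial>M) = ennreal (k1 \<mu> r \<delta>) * (\<integral>\<^sup>+\<omega>. ennreal (Zv \<tau> \<omega>) \<partial>M)"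
  proof -
    have "(\<integral>\<^sup>+\<omega>. ennreal (Yv \<tau> \<omega>) \<partial>M) = (\<integral>\<^sup>+\<omega>. (if \<tau> \<omega> = \<infinity> then 0 else \<integral>\<^sup>+t. ennreal (X \<omega> t) * indicator {real_of_ereal (\<tau> \<omega>)..<real_of_ereal (\<tau> \<omega>) + \<delta>} t \<partial>lborel) \<partial>M)"
      by (intro nn_integral_cong) (rule Yv_enn[OF st])
    also have "\<dots> = ennreal (k1 \<mu> r \<delta>) * (\<integral>\<^sup>+\<omega>. ennreal (Zv \<tau> \<omega>) \<partial>M)"
      unfolding Zv_def by (rule shift_int[OF st])
    finally show ?thesis .
  qed
  have bdY: "(\<integral>\<^sup>+\<omega>. ennreal (Yv \<tau> \<omega>) \<partial>M) \<le> ennreal (p / (r - \<mu>))"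
  proof -
    have "(\<integral>\<^sup>+\<omega>. ennreal (Yv \<tau> \<omega>) \<partial>M) \<le> (\<integral>\<^sup>+\<omega>. (\<integral>\<^sup>+t\<in>{0..}. ennreal (X \<omega> t) \<partial>lborel) \<partial>M)"
    proof (rule nn_integral_mono)
      fix \<omega> assume om: "\<omega> \<in> space M"
      have T0: "0 \<le> real_of_ereal (\<tau> \<omega>)" by (rule T_nonneg[OF st om])
      show "ennreal (Yv \<tau> \<omega>) \<le> (\<integral>\<^sup>+t\<in>{0..}. ennreal (X \<omega> t) \<partial>lborel)"
        unfolding Yv_enn[OF st om]
        using T0 by (auto intro!: nn_integral_mono mult_left_mono simp: indicator_def)
    qed
    also have "\<dots> = ennreal (p / (r - \<mu>))" by (rule G_eq)
    finally show ?thesis .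
  qed
  have finY: "(\<integral>\<^sup>+\<omega>. ennreal (Yv \<tau> \<omega>) \<partial>M) < \<infinity>"
    using bdY by (rule le_less_trans) simp
  show iY: "integrable M (Yv \<tau>)"
    by (rule integrableI_nonneg[OF Ym]) (use Yv_nonneg finY in auto)
  have k1p: "0 < k1 \<mu> r \<delta>" by (rule k1_pos[OF dp])
  have finZ: "(\<integral>\<^sup>+\<omega>. ennreal (Zv \<tau> \<omega>) \<partial>M) < \<infinity>"
    using finY k1p unfolding intY by (auto simp: ennreal_mult_less_top top_unique)
  show iZ: "integrable M (Zv \<tau>)"
    by (rule integrableI_nonneg[OF Zm]) (use Zn finZ in auto)
  have eY: "(\<integral>\<^sup>+\<omega>. ennreal (Yv \<tau> \<omega>) \<partial>M) = ennreal (integral\<^sup>L M (Yv \<tau>))"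
    by (rule nn_integral_eq_integral[OF iY]) (simp add: Yv_nonneg)
  have eZ: "(\<integral>\<^sup>+\<omega>. ennreal (Zv \<tau> \<omega>) \<partial>M) = ennreal (integral\<^sup>L M (Zv \<tau>))"
    by (rule nn_integral_eq_integral[OF iZ]) (simp add: Zn)
  have "ennreal (integral\<^sup>L M (Yv \<tau>)) = ennreal (k1 \<mu> r \<delta> * integral\<^sup>L M (Zv \<tau>))"
    using intY unfolding eY eZ using k1p by (simp add: ennreal_mult')
  moreover have "0 \<le> integral\<^sup>L M (Yv \<tau>)" by (simp add: Yv_nonneg)
  moreover have "0 \<le> k1 \<mu> r \<delta> * integral\<^sup>L M (Zv \<tau>)" using k1p Zn by simp
  ultimately show "integral\<^sup>L M (Yv \<tau>) = k1 \<mu> r \<delta> * integral\<^sup>L M (Zv \<tau>)" by simp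
qed

lemma main_pos:
  assumes dp: "0 < \<delta>" and adm: "admissible M F \<tau>I \<tau>O"
  shows "integral\<^sup>L M (reward_J \<mu> \<sigma> r C KI KO \<delta> p B \<tau>I \<tau>O) = integral\<^sup>L M (reward_Jt \<mu> \<sigma> r C KI KO \<delta> p B \<tau>I \<tau>O)"
proof -
  have stI: "stopping_time_inf M F \<tau>I" and stO: "stopping_time_inf M F \<tau>O"
    and le: "\<And>\<omega>. \<omega> \<in> space M \<Longrightarrow> \<tau>I \<omega> \<le> \<tau>O \<omega>"
    using adm unfolding admissible_def by auto
  have mI[measurable]: "\<tau>I \<in> borel_measurable M" by (rule stop_meas[OF stI])
  have mO[measurable]: "\<tau>O \<in> borel_measurable M" by (rule stop_meas[OF stO])
  define W where "W \<omega> = - (Yv \<tau>I \<omega> - k1 \<mu> r \<delta> * Zv \<tau>I \<omega>) + (Yv \<tau>O \<omega> - k1 \<mu> r \<delta> * Zv \<tau>O \<omega>)" for \<omega>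
  note YI = YZ_props[OF stI dp] and YO = YZ_props[OF stO dp]
  have iW: "integrable M W" unfolding W_def[abs_def] using YI YO by auto
  have W0: "integral\<^sup>L M W = 0" unfolding W_def[abs_def] using YI YO by simp
  let ?J = "reward_J \<mu> \<sigma> r C KI KO \<delta> p B \<tau>I \<tau>O"
  let ?Jt = "reward_Jt \<mu> \<sigma> r C KI KO \<delta> p B \<tau>I \<tau>O"
  have mJ: "?J \<in> borel_measurable M"
  proof -
    have "(\<lambda>\<omega>. run_int r C (\<lambda>t. gbm \<mu> \<sigma> p B t \<omega>) (\<tau>I \<omega> + ereal \<delta>) (\<tau>O \<omega> + ereal \<delta>)) \<in> borel_measurable M"
      by (rule RI_meas) (use stop_nonneg[OF stI] del_nn in \<open>auto simp: add_nonneg_nonneg\<close>)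
    moreover have "(\<lambda>\<omega>. disc_at r (\<lambda>_. KI) (\<tau>I \<omega> + ereal \<delta>)) \<in> borel_measurable M" by (rule discK_meas[OF stI])
    moreover have "(\<lambda>\<omega>. disc_at r (\<lambda>_. KO) (\<tau>O \<omega> + ereal \<delta>)) \<in> borel_measurable M" by (rule discK_meas[OF stO])
    ultimately show ?thesis unfolding reward_J_def[abs_def] by measurable
  qed
  have mJt: "?Jt \<in> borel_measurable M"
  proof -
    have "(\<lambda>\<omega>. run_int r C (\<lambda>t. gbm \<mu> \<sigma> p B t \<omega>) (\<tau>I \<omega>) (\<tau>O \<omega>)) \<in> borel_measurable M"
      by (rule RI_meas) (use stop_nonneg[OF stI] in auto)
    moreover have "(\<lambda>\<omega>. disc_at r (\<lambda>t. k1 \<mu> r \<delta> * gbm \<mu> \<sigma> p B t \<omega> + k0 r C KI \<delta>) (\<tau>I \<omega>)) \<in> borel_measurable M"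
      by (rule disc_meas[OF stI])
    moreover have "(\<lambda>\<omega>. disc_at r (\<lambda>t. l1 \<mu> r \<delta> * gbm \<mu> \<sigma> p B t \<omega> + l0 r C KO \<delta>) (\<tau>O \<omega>)) \<in> borel_measurable M"
      by (rule disc_meas[OF stO])
    ultimately show ?thesis unfolding reward_Jt_def[abs_def] by measurable
  qed
  have AEeq: "AE \<omega> in M. ?J \<omega> = ?Jt \<omega> + W \<omega>"
    using good_AE
  proof (rule AE_mp, intro AE_I2 impI)
    fix \<omega> assume om: "\<omega> \<in> space M" and good: "(\<integral>\<^sup>+t\<in>{0..}. ennreal (X \<omega> t) \<partial>lborel) \<noteq> \<infinity>"
    have a0: "0 \<le> \<tau>I \<omega>" by (rule stop_nonneg[OF stI om])
    have b0: "0 \<le> \<tau>O \<omega>" by (rule stop_nonneg[OF stO om])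
    have ab: "\<tau>I \<omega> \<le> \<tau>O \<omega>" by (rule le[OF om])
    have ad0: "0 \<le> \<tau>I \<omega> + ereal \<delta>" using a0 del_nn by (simp add: add_nonneg_nonneg)
    have J1: "?J \<omega> = run_int r C (gm \<omega>) (\<tau>I \<omega> + ereal \<delta>) (\<tau>O \<omega> + ereal \<delta>) - disc_at r (\<lambda>_. KI) (\<tau>I \<omega> + ereal \<delta>) - disc_at r (\<lambda>_. KO) (\<tau>O \<omega> + ereal \<delta>)"
      unfolding reward_J_def RI_gm[OF ad0] ..
    have J2: "?Jt \<omega> = run_int r C (gm \<omega>) (\<tau>I \<omega>) (\<tau>O \<omega>) - disc_at r (\<lambda>t. k1 \<mu> r \<delta> * gm \<omega> t + k0 r C KI \<delta>) (\<tau>I \<omega>) - disc_at r (\<lambda>t. l1 \<mu> r \<delta> * gm \<omega> t + l0 r C KO \<delta>) (\<tau>O \<omega>)"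
      unfolding reward_Jt_def RI_gm[OF a0] disc_gm[OF a0] disc_gm[OF b0] ..
    have zI: "(if \<tau>I \<omega> = \<infinity> then 0 else X \<omega> (real_of_ereal (\<tau>I \<omega>))) = Zv \<tau>I \<omega>"
      unfolding Zv_def using Xs_X[OF stI om order_refl] by simp
    have zO: "(if \<tau>O \<omega> = \<infinity> then 0 else X \<omega> (real_of_ereal (\<tau>O \<omega>))) = Zv \<tau>O \<omega>"
      unfolding Zv_def using Xs_X[OF stO om order_refl] by simp
    show "?J \<omega> = ?Jt \<omega> + W \<omega>"
      unfolding J1 J2 W_def Yv_def path_id[OF om good a0 ab, of C KI KO] zI zO by simp
  qed
  show ?thesis
  proof (cases "integrable M ?Jt")
    case True
    have iJ2: "integrable M (\<lambda>\<omega>. ?Jt \<omega> + W \<omega>)" using True iW by simp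
    have iJ: "integrable M ?J"
      by (rule integrable_cong_AE_imp[OF iJ2 mJ]) (use AEeq in \<open>auto elim: AE_mp\<close>)
    have "integral\<^sup>L M ?J = integral\<^sup>L M (\<lambda>\<omega>. ?Jt \<omega> + W \<omega>)"
      by (rule integral_cong_AE[OF mJ _ AEeq]) (use mJt iW in measurable)
    also have "\<dots> = integral\<^sup>L M ?Jt" using True iW W0 by simp
    finally show ?thesis .
  next
    case False
    have "\<not> integrable M ?J"
    proof
      assume iJ: "integrable M ?J"
      have "integrable M (\<lambda>\<omega>. ?J \<omega> - W \<omega>)" using iJ iW by simp
      moreover have "AE \<omega> in M. ?J \<omega> - W \<omega> = ?Jt \<omega>" using AEeq by (auto elim: AE_mp)
      ultimately have "integrable M ?Jt" by (rule integrable_cong_AE_imp[OF _ mJt])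
      with False show False by simp
    qed
    then show ?thesis using False by (simp add: not_integrable_integral_eq)
  qed
qed

end

lemma main_eq:
  fixes M :: "'a measure" and F :: "real \<Rightarrow> 'a measure" and B :: "real \<Rightarrow> 'a \<Rightarrow> real"
    and \<mu> \<sigma> r C KI KO \<delta> p :: real
  assumes "prob_space M" and "usual_filtration M F" and "std_brownian_motion M F B"
    and "0 < r" and "0 \<le> \<delta>" and "\<mu> < r" and "0 < p"
    and adm: "admissible M F \<tau>I \<tau>O"
  shows "integral\<^sup>L M (reward_J \<mu> \<sigma> r C KI KO \<delta> p B \<tau>I \<tau>O) = integral\<^sup>L M (reward_Jt \<mu> \<sigma> r C KI KO \<delta> p B \<tau>I \<tau>O)"
proof (cases "\<delta> = 0")
  case True
  have "reward_J \<mu> \<sigma> r C KI KO \<delta> p B \<tau>I \<tau>O = reward_Jt \<mu> \<sigma> r C KI KO \<delta> p B \<tau>I \<tau>O"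
    using True by (simp add: fun_eq_iff reward_J_def reward_Jt_def k1_def k0_def l1_def l0_def zero_ereal_def[symmetric])
  then show ?thesis by simp
next
  case False
  interpret optm M F B \<mu> \<sigma> r p \<delta>
    by (intro optm.intro bmset.intro bmset_axioms.intro optm_axioms.intro) (use assms False in auto)
  show ?thesis by (rule main_pos[OF _ adm]) (use assms False in auto)
qed

theorem theorem5p2:
  fixes M :: "'a measure" and F :: "real \<Rightarrow> 'a measure" and B :: "real \<Rightarrow> 'a \<Rightarrow> real"
    and \<mu> \<sigma> r C KI KO \<delta> p :: real
  assumes "prob_space M"
    and "usual_filtration M F"
    and "std_brownian_motion M F B"
    and "\<sigma> > 0" and "r > 0" and "\<delta> \<ge> 0"
    and "r > \<mu>"
    and "p > 0"
  shows "J_val M F B \<mu> \<sigma> r C KI KO \<delta> p = Jt_val M F B \<mu> \<sigma> r C KI KO \<delta> p \<and>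
    (\<forall>\<tau>I \<tau>O. admissible M F \<tau>I \<tau>O \<longrightarrow>
       ereal (integral\<^sup>L M (reward_Jt \<mu> \<sigma> r C KI KO \<delta> p B \<tau>I \<tau>O))
         = Jt_val M F B \<mu> \<sigma> r C KI KO \<delta> p \<longrightarrow>
       ereal (integral\<^sup>L M (reward_J \<mu> \<sigma> r C KI KO \<delta> p B \<tau>I \<tau>O))
         = J_val M F B \<mu> \<sigma> r C KI KO \<delta> p)"
proof -
  have eq: "integral\<^sup>L M (reward_J \<mu> \<sigma> r C KI KO \<delta> p B \<tau>I \<tau>O) = integral\<^sup>L M (reward_Jt \<mu> \<sigma> r C KI KO \<delta> p B \<tau>I \<tau>O)"
    if "admissible M F \<tau>I \<tau>O" for \<tau>I \<tau>O
    by (rule main_eq[OF assms(1-3) _ _ _ _ that]) (use assms in auto)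
  have JJ: "J_val M F B \<mu> \<sigma> r C KI KO \<delta> p = Jt_val M F B \<mu> \<sigma> r C KI KO \<delta> p"
    unfolding J_val_def Jt_val_def
    by (rule SUP_cong[OF refl]) (auto simp: eq)
  show ?thesis using JJ eq by simp
qed

end
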